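(* Let $\tau$ be a countable relational signature and let $\mathcal{F}=\langle R_i:i<\omega\rangle$ be a countable family of relations on $\mathbb{N}$ (each of finite arity). Let $\mathrm{Aut}(\mathcal{F})$ be the group of permutations $g$ of $\mathbb{N}$ with $g(R_i)=R_i$ for all $i$. Then every $\mathrm{Aut}(\mathcal{F})$-invariant Borel subset of $X_\tau$ is definable in $\mathscr{L}_{\omega_1\omega}(\mathcal{F})$.
   Context: For a countable relational signature $\tau$ in which each $R\in\tau$ has finite arity $a(R)$, the logic space is $X_\tau=\prod_{R\in\tau}2^{\mathbb{N}^{a(R)}}$ with the product topology; its elements are $\tau$-structures with universe $\mathbb{N}$. A permutation $g$ of $\mathbb{N}$ acts on tuples coordinatewise, on subsets of $\mathbb{N}^k$ by $g(A)=\{g(a):a\in A\}$, and on $X_\tau$ by $R^{g(M)}=g(R^M)$ for each $R\in\tau$. For a group $G$ of permutations, $A\subseteq X_\tau$ is $G$-invariant if $g(A)=A$ for all $g\in G$. $\mathscr{L}_{\omega_1\omega}(\mathcal{F})$ is the infinitary logic with countable conjunctions and disjunctions and finite strings of ordinary quantifiers, in the signature $\tau$ together with a symbol for each $R_i$ with fixed interpretation $R_i$. A set $A\subseteq X_\tau$ is definable in it if there is a sentence $\varphi$ with $M\in A\iff M\models\varphi$ for all $M\in X_\tau$. *)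

theory Defs
  imports "HOL-Analysis.Analysis"
begin

text \<open>A countable relational signature tau is given by a set S of symbol indices
  (a subset of nat, hence countable) and an arity function ar.  A tau-structure with universe nat is an element of the logic
  space, represented as M :: nat => nat list => bool, extensional: M R is defined
  only for R in S and only on tuples of length ar R (R^M = the set of xs with M R xs).\<close>

definition tuples :: "nat \<Rightarrow> nat list set" where
  "tuples k = {xs. length xs = k}"

definition logic_space :: "nat set \<Rightarrow> (nat \<Rightarrow> nat) \<Rightarrow> (nat \<Rightarrow> nat list \<Rightarrow> bool) topology" where
  "logic_space S ar =
     product_topology (\<lambda>R. product_topology (\<lambda>xs. discrete_topology (UNIV :: bool set)) (tuples (ar R))) S"

definition borel_sets_of :: "'a topology \<Rightarrow> 'a set set" where
  "borel_sets_of T = sigma_sets (topspace T) {U. openin T U}"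

definition perm_act :: "nat set \<Rightarrow> (nat \<Rightarrow> nat) \<Rightarrow> (nat \<Rightarrow> nat) \<Rightarrow> (nat \<Rightarrow> nat list \<Rightarrow> bool) \<Rightarrow> (nat \<Rightarrow> nat list \<Rightarrow> bool)" where
  "perm_act S ar g M = (\<lambda>R\<in>S. \<lambda>xs\<in>tuples (ar R). (xs \<in> map g ` {ys. M R ys}))"

definition Aut :: "(nat \<Rightarrow> nat list set) \<Rightarrow> (nat \<Rightarrow> nat) set" where
  "Aut FR = {g. bij g \<and> (\<forall>i. map g ` FR i = FR i)}"

text \<open>Formulas of L_{omega_1 omega}(F): atoms for the symbols of tau, for the fixed
  relations R_i of F, and equality; negation; countable conjunctions and disjunctions
  (indexed by nat; every nonempty countable family can be so indexed, finite ones by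
  repetition); existential and universal quantification over a variable.\<close>
datatype form =
    Rel nat "nat list"
  | FRel nat "nat list"
  | Eq nat nat
  | Neg form
  | BigAnd "nat \<Rightarrow> form"
  | BigOr "nat \<Rightarrow> form"
  | Ex nat form
  | All nat form

primrec fv :: "form \<Rightarrow> nat set" where
  "fv (Rel R vs) = set vs"
| "fv (FRel i vs) = set vs"
| "fv (Eq u v) = {u, v}"
| "fv (Neg \<phi>) = fv \<phi>"
| "fv (BigAnd f) = (\<Union>n. fv (f n))"
| "fv (BigOr f) = (\<Union>n. fv (f n))"
| "fv (Ex v \<phi>) = fv \<phi> - {v}"
| "fv (All v \<phi>) = fv \<phi> - {v}"

primrec wf_form :: "nat set \<Rightarrow> (nat \<Rightarrow> nat) \<Rightarrow> (nat \<Rightarrow> nat) \<Rightarrow> form \<Rightarrow> bool" where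
  "wf_form S ar FA (Rel R vs) = (R \<in> S \<and> length vs = ar R)"
| "wf_form S ar FA (FRel i vs) = (length vs = FA i)"
| "wf_form S ar FA (Eq u v) = True"
| "wf_form S ar FA (Neg \<phi>) = wf_form S ar FA \<phi>"
| "wf_form S ar FA (BigAnd f) = (\<forall>n. wf_form S ar FA (f n))"
| "wf_form S ar FA (BigOr f) = (\<forall>n. wf_form S ar FA (f n))"
| "wf_form S ar FA (Ex v \<phi>) = wf_form S ar FA \<phi>"
| "wf_form S ar FA (All v \<phi>) = wf_form S ar FA \<phi>"

primrec sat :: "(nat \<Rightarrow> nat list set) \<Rightarrow> (nat \<Rightarrow> nat list \<Rightarrow> bool) \<Rightarrow> (nat \<Rightarrow> nat) \<Rightarrow> form \<Rightarrow> bool" where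
  "sat FR M e (Rel R vs) = M R (map e vs)"
| "sat FR M e (FRel i vs) = (map e vs \<in> FR i)"
| "sat FR M e (Eq u v) = (e u = e v)"
| "sat FR M e (Neg \<phi>) = (\<not> sat FR M e \<phi>)"
| "sat FR M e (BigAnd f) = (\<forall>n. sat FR M e (f n))"
| "sat FR M e (BigOr f) = (\<exists>n. sat FR M e (f n))"
| "sat FR M e (Ex v \<phi>) = (\<exists>a. sat FR M (e(v := a)) \<phi>)"
| "sat FR M e (All v \<phi>) = (\<forall>a. sat FR M (e(v := a)) \<phi>)"

definition sentence :: "nat set \<Rightarrow> (nat \<Rightarrow> nat) \<Rightarrow> (nat \<Rightarrow> nat) \<Rightarrow> form \<Rightarrow> bool" where
  "sentence S ar FA \<phi> \<longleftrightarrow> wf_form S ar FA \<phi> \<and> fv \<phi> = {}"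

text \<open>A is definable in L_{omega_1 omega}(F): some sentence phi with M in A iff M |= phi,
  for all M in X_tau (the assignment is irrelevant for sentences; we use the constant 0 one).\<close>
definition definable :: "nat set \<Rightarrow> (nat \<Rightarrow> nat) \<Rightarrow> (nat \<Rightarrow> nat) \<Rightarrow> (nat \<Rightarrow> nat list set)
    \<Rightarrow> (nat \<Rightarrow> nat list \<Rightarrow> bool) set \<Rightarrow> bool" where
  "definable S ar FA FR A \<longleftrightarrow>
     (\<exists>\<phi>. sentence S ar FA \<phi> \<and>
        (\<forall>M\<in>topspace (logic_space S ar). M \<in> A \<longleftrightarrow> sat FR M (\<lambda>_. 0) \<phi>))"

end

theory Submission
  imports Defs
begin
definition pfx :: "'a list \<Rightarrow> 'a list \<Rightarrow> bool" where "pfx q r \<longleftrightarrow> (\<exists>w. r = q @ w)"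

lemma pfx_refl[simp]: "pfx q q" unfolding pfx_def by (rule exI[of _ "[]"]) simp
lemma pfx_append[simp]: "pfx q (q @ w)" unfolding pfx_def by blast
lemma pfx_trans: "pfx a b \<Longrightarrow> pfx b c \<Longrightarrow> pfx a c" unfolding pfx_def by auto
lemma pfx_set: "pfx a b \<Longrightarrow> set a \<subseteq> set b" unfolding pfx_def by auto
lemma pfx_length: "pfx a b \<Longrightarrow> length a \<le> length b" unfolding pfx_def by auto
lemma pfx_nth: "pfx a b \<Longrightarrow> i < length a \<Longrightarrow> b ! i = a ! i" unfolding pfx_def by (auto simp: nth_append)

definition FTrue :: form where "FTrue = All 0 (Eq 0 0)"
definition FFalse :: form where "FFalse = Neg FTrue"
definition Conj :: "form \<Rightarrow> form \<Rightarrow> form" where "Conj a b = BigAnd (\<lambda>k. if k = 0 then a else b)"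
definition Imp :: "form \<Rightarrow> form \<Rightarrow> form" where "Imp a b = BigOr (\<lambda>k. if k = 0 then Neg a else b)"

primrec exs :: "nat \<Rightarrow> nat \<Rightarrow> form \<Rightarrow> form" where
  "exs n 0 \<phi> = \<phi>"
| "exs n (Suc j) \<phi> = Ex n (exs (Suc n) j \<phi>)"

definition alls :: "nat \<Rightarrow> nat \<Rightarrow> form \<Rightarrow> form" where "alls n j \<phi> = Neg (exs n j (Neg \<phi>))"

primrec pure :: "form \<Rightarrow> bool" where
  "pure (Rel R vs) = False"
| "pure (FRel i vs) = True"
| "pure (Eq u v) = True"
| "pure (Neg \<phi>) = pure \<phi>"
| "pure (BigAnd f) = (\<forall>n. pure (f n))"
| "pure (BigOr f) = (\<forall>n. pure (f n))"
| "pure (Ex v \<phi>) = pure \<phi>"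
| "pure (All v \<phi>) = pure \<phi>"

lemma FTrue_simps[simp]: "sat FR M e FTrue" "fv FTrue = {}" "wf_form S ar FA FTrue" "pure FTrue"
  by (auto simp: FTrue_def)
lemma FFalse_simps[simp]: "\<not> sat FR M e FFalse" "fv FFalse = {}" "wf_form S ar FA FFalse" "pure FFalse"
  by (auto simp: FFalse_def)
lemma Conj_simps[simp]: "sat FR M e (Conj a b) = (sat FR M e a \<and> sat FR M e b)"
  "fv (Conj a b) = fv a \<union> fv b" "wf_form S ar FA (Conj a b) = (wf_form S ar FA a \<and> wf_form S ar FA b)"
  "pure (Conj a b) = (pure a \<and> pure b)"
  by (auto simp: Conj_def split: if_splits)
lemma Imp_simps[simp]: "sat FR M e (Imp a b) = (sat FR M e a \<longrightarrow> sat FR M e b)"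
  "fv (Imp a b) = fv a \<union> fv b" "wf_form S ar FA (Imp a b) = (wf_form S ar FA a \<and> wf_form S ar FA b)"
  "pure (Imp a b) = (pure a \<and> pure b)"
  by (auto simp: Imp_def split: if_splits)

lemma exs_simps[simp]: "fv (exs n j \<phi>) = fv \<phi> - {n..<n+j}"
  "wf_form S ar FA (exs n j \<phi>) = wf_form S ar FA \<phi>" "pure (exs n j \<phi>) = pure \<phi>"
  by (induction j arbitrary: n) auto

lemma alls_simps[simp]: "fv (alls n j \<phi>) = fv \<phi> - {n..<n+j}"
  "wf_form S ar FA (alls n j \<phi>) = wf_form S ar FA \<phi>" "pure (alls n j \<phi>) = pure \<phi>"
  by (auto simp: alls_def)

definition upd :: "nat \<Rightarrow> nat list \<Rightarrow> (nat \<Rightarrow> nat) \<Rightarrow> nat \<Rightarrow> nat" where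
  "upd n w e = (\<lambda>v. if n \<le> v \<and> v < n + length w then w ! (v - n) else e v)"

lemma sat_exs: "sat FR M e (exs n j \<phi>) \<longleftrightarrow> (\<exists>w. length w = j \<and> sat FR M (upd n w e) \<phi>)"
proof (induction j arbitrary: n e)
  case 0
  have "upd n [] e = e" by (auto simp: upd_def)
  then show ?case by auto
next
  case (Suc j)
  have eq: "upd (Suc n) w (e(n := a)) = upd n (a # w) e" for a w
    by (auto simp: upd_def fun_eq_iff nth_Cons')
  have IH: "sat FR M (e(n:=a)) (exs (Suc n) j \<phi>) \<longleftrightarrow> (\<exists>w. length w = j \<and> sat FR M (upd (Suc n) w (e(n:=a))) \<phi>)" for a
    by (rule Suc.IH)
  show ?case
  proof
    assume "sat FR M e (exs n (Suc j) \<phi>)"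
    then obtain a where "sat FR M (e(n:=a)) (exs (Suc n) j \<phi>)" by auto
    then obtain w where "length w = j" "sat FR M (upd (Suc n) w (e(n := a))) \<phi>"
      using IH by blast
    then show "\<exists>w. length w = Suc j \<and> sat FR M (upd n w e) \<phi>"
      by (intro exI[of _ "a # w"]) (simp only: eq length_Cons)
  next
    assume "\<exists>w. length w = Suc j \<and> sat FR M (upd n w e) \<phi>"
    then obtain w where w: "length w = Suc j" "sat FR M (upd n w e) \<phi>" by blast
    then obtain a w' where aw: "w = a # w'" by (cases w) auto
    with w have "length w' = j" "sat FR M (upd (Suc n) w' (e(n := a))) \<phi>" by (auto simp only: eq length_Cons)
    then have "sat FR M (e(n:=a)) (exs (Suc n) j \<phi>)" using IH by blast
    then show "sat FR M e (exs n (Suc j) \<phi>)" by auto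
  qed
qed

lemma sat_alls: "sat FR M e (alls n j \<phi>) \<longleftrightarrow> (\<forall>w. length w = j \<longrightarrow> sat FR M (upd n w e) \<phi>)"
  by (auto simp: alls_def sat_exs)

lemma map_upd: "map (upd n w e) [0..<n + length w] = map e [0..<n] @ w"
  by (rule nth_equalityI) (auto simp: upd_def nth_append)

lemma sat_cong: "(\<And>v. v \<in> fv \<phi> \<Longrightarrow> e v = e' v) \<Longrightarrow> sat FR M e \<phi> = sat FR M e' \<phi>"
proof (induction \<phi> arbitrary: e e')
  case (Rel R vs)
  then have "map e vs = map e' vs" by auto
  then show ?case by (metis sat.simps(1))
next
  case (FRel i vs)
  then have "map e vs = map e' vs" by auto
  then show ?case by (metis sat.simps(2))
next
  case (Eq u v)
  have "e u = e' u" "e v = e' v" using Eq by auto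
  then show ?case by simp
next
  case (Neg \<phi>)
  have "sat FR M e \<phi> = sat FR M e' \<phi>" by (rule Neg.IH) (use Neg.prems in auto)
  then show ?case by simp
next
  case (BigAnd f)
  have "sat FR M e (f n) = sat FR M e' (f n)" for n
    by (rule BigAnd.IH) (use BigAnd.prems in auto)
  then show ?case by simp
next
  case (BigOr f)
  have "sat FR M e (f n) = sat FR M e' (f n)" for n
    by (rule BigOr.IH) (use BigOr.prems in auto)
  then show ?case by simp
next
  case (Ex v \<phi>)
  have "sat FR M (e(v:=a)) \<phi> = sat FR M (e'(v:=a)) \<phi>" for a
    by (rule Ex.IH) (use Ex.prems in auto)
  then show ?case by simp
next
  case (All v \<phi>)
  have "sat FR M (e(v:=a)) \<phi> = sat FR M (e'(v:=a)) \<phi>" for a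
    by (rule All.IH) (use All.prems in auto)
  then show ?case by simp
qed

lemma sat_pure: "pure \<phi> \<Longrightarrow> sat FR M e \<phi> = sat FR M' e \<phi>"
proof (induction \<phi> arbitrary: e)
  case (BigAnd f)
  have "sat FR M e (f n) = sat FR M' e (f n)" for n
    by (rule BigAnd.IH) (use BigAnd.prems in auto)
  then show ?case by simp
next
  case (BigOr f)
  have "sat FR M e (f n) = sat FR M' e (f n)" for n
    by (rule BigOr.IH) (use BigOr.prems in auto)
  then show ?case by simp
qed simp_all

locale LE =
  fixes S :: "nat set" and ar :: "nat \<Rightarrow> nat" and FA :: "nat \<Rightarrow> nat" and FR :: "nat \<Rightarrow> nat list set"
  assumes FR_sub: "\<And>i. FR i \<subseteq> tuples (FA i)"
begin

abbreviation "X \<equiv> topspace (logic_space S ar)"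

definition defs :: "nat \<Rightarrow> form \<Rightarrow> ((nat \<Rightarrow> nat list \<Rightarrow> bool) \<Rightarrow> nat list \<Rightarrow> bool) \<Rightarrow> bool" where
  "defs n \<phi> P \<longleftrightarrow> wf_form S ar FA \<phi> \<and> fv \<phi> \<subseteq> {..<n} \<and> (\<forall>M\<in>X. \<forall>e. sat FR M e \<phi> \<longleftrightarrow> P M (map e [0..<n]))"

lemma defs_exs:
  assumes "defs (n + j) \<phi> P"
  shows "defs n (exs n j \<phi>) (\<lambda>M q. \<exists>w. length w = j \<and> P M (q @ w))"
  unfolding defs_def
proof (intro conjI ballI allI)
  show "wf_form S ar FA (exs n j \<phi>)" using assms by (simp add: defs_def)
  show "fv (exs n j \<phi>) \<subseteq> {..<n}" using assms by (auto simp: defs_def)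
  fix M e assume M: "M \<in> X"
  have "sat FR M e (exs n j \<phi>) \<longleftrightarrow> (\<exists>w. length w = j \<and> sat FR M (upd n w e) \<phi>)" by (rule sat_exs)
  also have "\<dots> \<longleftrightarrow> (\<exists>w. length w = j \<and> P M (map (upd n w e) [0..<n + j]))"
    using assms M unfolding defs_def by blast
  also have "\<dots> \<longleftrightarrow> (\<exists>w. length w = j \<and> P M (map e [0..<n] @ w))"
    using map_upd by metis
  finally show "sat FR M e (exs n j \<phi>) \<longleftrightarrow> (\<exists>w. length w = j \<and> P M (map e [0..<n] @ w))" .
qed

lemma defs_Neg: "defs n \<phi> P \<Longrightarrow> defs n (Neg \<phi>) (\<lambda>M q. \<not> P M q)"
  by (simp add: defs_def)

lemma defs_alls:
  assumes "defs (n + j) \<phi> P"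
  shows "defs n (alls n j \<phi>) (\<lambda>M q. \<forall>w. length w = j \<longrightarrow> P M (q @ w))"
proof -
  have "defs n (Neg (exs n j (Neg \<phi>))) (\<lambda>M q. \<not> (\<exists>w. length w = j \<and> \<not> P M (q @ w)))"
    by (intro defs_Neg defs_exs assms)
  then show ?thesis unfolding alls_def by simp
qed

lemma defs_BigAnd: "(\<And>k. defs n (f k) (P k)) \<Longrightarrow> defs n (BigAnd f) (\<lambda>M q. \<forall>k. P k M q)"
  unfolding defs_def by auto

lemma defs_BigOr: "(\<And>k. defs n (f k) (P k)) \<Longrightarrow> defs n (BigOr f) (\<lambda>M q. \<exists>k. P k M q)"
  unfolding defs_def by auto

lemma defs_Conj: "defs n a P \<Longrightarrow> defs n b Q \<Longrightarrow> defs n (Conj a b) (\<lambda>M q. P M q \<and> Q M q)"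
  unfolding defs_def by auto

lemma defs_Imp: "defs n a P \<Longrightarrow> defs n b Q \<Longrightarrow> defs n (Imp a b) (\<lambda>M q. P M q \<longrightarrow> Q M q)"
  unfolding defs_def by auto

lemma defs_FTrue: "defs n FTrue (\<lambda>M q. True)" and defs_FFalse: "defs n FFalse (\<lambda>M q. False)"
  unfolding defs_def by auto

lemma defs_cong: "defs n \<phi> P \<Longrightarrow> (\<And>M q. M \<in> X \<Longrightarrow> length q = n \<Longrightarrow> P M q = P' M q) \<Longrightarrow> defs n \<phi> P'"
  unfolding defs_def by auto

end

context LE begin

abbreviation "G \<equiv> Aut FR"

definition N :: "nat list \<Rightarrow> (nat \<Rightarrow> nat) set" where
  "N q = {h \<in> G. q = map h [0..<length q]}"
definition valid :: "nat list \<Rightarrow> bool" where "valid q \<longleftrightarrow> N q \<noteq> {}"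
definition nwd :: "(nat \<Rightarrow> nat) set \<Rightarrow> bool" where
  "nwd Z \<longleftrightarrow> (\<forall>q. valid q \<longrightarrow> (\<exists>r. pfx q r \<and> valid r \<and> N r \<inter> Z = {}))"
definition meager :: "(nat \<Rightarrow> nat) set \<Rightarrow> bool" where
  "meager C \<longleftrightarrow> (\<exists>Z. (\<forall>k::nat. nwd (Z k)) \<and> C \<inter> G \<subseteq> (\<Union>k. Z k))"

lemma N_sub: "N q \<subseteq> G" by (auto simp: N_def)

lemma pfx_map_upt: "a \<le> b \<Longrightarrow> pfx (map h [0..<a]) (map h [0..<b])"
  unfolding pfx_def
proof (rule exI[of _ "map h [a..<b]"])
  assume ab: "a \<le> b"
  then obtain k where b: "b = a + k" using le_Suc_ex by blast
  have "[0..<a + k] = [0..<a] @ [a..<a + k]" by (rule upt_add_eq_append) simp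
  then show "map h [0..<b] = map h [0..<a] @ map h [a..<b]" using b by simp
qed

lemma N_mono: "pfx q r \<Longrightarrow> N r \<subseteq> N q"
proof
  fix h assume p: "pfx q r" and h: "h \<in> N r"
  then obtain w where r: "r = q @ w" by (auto simp: pfx_def)
  have "q = take (length q) r" using r by simp
  also have "\<dots> = map h [0..<length q]" using h r by (simp add: N_def take_map)
  finally show "h \<in> N q" using h by (simp add: N_def)
qed

lemma valid_pfx: "pfx q r \<Longrightarrow> valid r \<Longrightarrow> valid q"
  using N_mono unfolding valid_def by blast

lemma N_incomp: "\<not> pfx q r \<Longrightarrow> \<not> pfx r q \<Longrightarrow> N q \<inter> N r = {}"
proof (rule ccontr)
  assume a: "\<not> pfx q r" "\<not> pfx r q" "N q \<inter> N r \<noteq> {}"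
  then obtain h where "q = map h [0..<length q]" "r = map h [0..<length r]" by (auto simp: N_def)
  then show False using a(1,2) pfx_map_upt[of "length q" "length r" h] pfx_map_upt[of "length r" "length q" h]
    by (cases "length q \<le> length r") auto
qed

lemma in_N: "h \<in> G \<Longrightarrow> h \<in> N (map h [0..<n])"
  by (simp add: N_def)

lemma valid_map: "h \<in> G \<Longrightarrow> valid (map h [0..<n])"
  using in_N unfolding valid_def by blast

lemma N_Nil: "N [] = G" by (auto simp: N_def)

lemma id_G: "id \<in> G" by (simp add: Aut_def)

lemma valid_Nil: "valid []" using id_G N_Nil valid_def by auto

lemma G_inj: "h \<in> G \<Longrightarrow> inj h" by (simp add: Aut_def bij_def)
lemma G_surj: "h \<in> G \<Longrightarrow> surj h" by (simp add: Aut_def bij_def)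
lemma G_FR: "h \<in> G \<Longrightarrow> map h ` FR i = FR i" by (simp add: Aut_def)

lemma valid_distinct: "valid q \<Longrightarrow> distinct q"
proof -
  assume "valid q"
  then obtain h where h: "h \<in> N q" by (auto simp: valid_def)
  then have e: "q = map h [0..<length q]" and i: "inj h" by (auto simp: N_def G_inj)
  obtain n where n: "n = length q" by simp
  have "distinct (map h [0..<n])" using i by (simp add: distinct_map inj_on_def inj_def)
  then show "distinct q" using e n by simp
qed

lemma N_nth: "h \<in> N q \<Longrightarrow> i < length q \<Longrightarrow> h i = q ! i"
proof -
  assume h: "h \<in> N q" and i: "i < length q"
  obtain n where n: "n = length q" by simp
  have "q = map h [0..<n]" using h n by (simp add: N_def)
  then have "q ! i = map h [0..<n] ! i" by simp
  then show ?thesis using i n by simp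
qed

lemma N_iff: "h \<in> N q \<longleftrightarrow> h \<in> G \<and> (\<forall>i<length q. h i = q ! i)"
proof
  assume "h \<in> N q" then show "h \<in> G \<and> (\<forall>i<length q. h i = q ! i)" using N_nth N_sub by blast
next
  assume "h \<in> G \<and> (\<forall>i<length q. h i = q ! i)"
  then show "h \<in> N q" unfolding N_def by (auto intro!: nth_equalityI)
qed

lemma nwd_empty: "nwd {}" unfolding nwd_def using pfx_refl by blast

lemma meager_mono: "C \<subseteq> D \<Longrightarrow> meager D \<Longrightarrow> meager C"
  unfolding meager_def by blast

lemma meager_empty: "meager {}"
  unfolding meager_def using nwd_empty by (intro exI[of _ "\<lambda>_. {}"]) auto

lemma meager_UN: assumes "\<And>k::nat. meager (C k)" shows "meager (\<Union>k. C k)"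
proof -
  have "\<forall>k. \<exists>Z. (\<forall>j::nat. nwd (Z j)) \<and> C k \<inter> G \<subseteq> (\<Union>j. Z j)" using assms unfolding meager_def by blast
  then obtain Z where "\<forall>k. (\<forall>j::nat. nwd (Z k j)) \<and> C k \<inter> G \<subseteq> (\<Union>j. Z k j)" by (rule choice_iff[THEN iffD1, elim_format]) blast
  then have Z: "\<And>k j. nwd (Z k j)" "\<And>k. C k \<inter> G \<subseteq> (\<Union>j. Z k j)" by blast+
  define Z' where "Z' i = (case prod_decode i of (k, j) \<Rightarrow> Z k j)" for i
  have "nwd (Z' i)" for i using Z(1) by (simp add: Z'_def split: prod.splits)
  moreover have "(\<Union>k. C k) \<inter> G \<subseteq> (\<Union>i. Z' i)"
  proof
    fix h assume "h \<in> (\<Union>k. C k) \<inter> G"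
    then obtain k j where "h \<in> Z k j" using Z(2) by blast
    then have "h \<in> Z' (prod_encode (k, j))" by (simp add: Z'_def)
    then show "h \<in> (\<Union>i. Z' i)" by blast
  qed
  ultimately show ?thesis unfolding meager_def by blast
qed

lemma meager_Un: "meager A \<Longrightarrow> meager B \<Longrightarrow> meager (A \<union> B)"
proof -
  assume "meager A" "meager B"
  then have "meager (\<Union>k. if k = (0::nat) then A else B)" by (intro meager_UN) auto
  moreover have "(\<Union>k. if k = (0::nat) then A else B) = A \<union> B" by (auto split: if_splits)
  ultimately show ?thesis by simp
qed

lemma meager_UN_countable: assumes "\<And>x::'a::countable. meager (C x)" shows "meager (\<Union>x. C x)"
proof -
  have "(\<Union>x. C x) = (\<Union>k. C (from_nat k))"
  proof
    show "(\<Union>x. C x) \<subseteq> (\<Union>k. C (from_nat k))"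
    proof
      fix h assume "h \<in> (\<Union>x. C x)"
      then obtain x where "h \<in> C x" by blast
      then have "h \<in> C (from_nat (to_nat x))" by simp
      then show "h \<in> (\<Union>k. C (from_nat k))" by blast
    qed
  qed blast
  then show ?thesis using meager_UN[of "\<lambda>k. C (from_nat k)"] assms by simp
qed

lemma meager_nonG: "C \<inter> G = {} \<Longrightarrow> meager C"
  unfolding meager_def using nwd_empty by (intro exI[of _ "\<lambda>_. {}"]) auto

end

context LE begin

lemma meager_nwd: "nwd Z \<Longrightarrow> meager Z"
  unfolding meager_def by (intro exI[of _ "\<lambda>_. Z"]) auto

lemma step_ext:
  assumes r: "valid r" and Z: "nwd Z"
  shows "\<exists>r'. pfx r r' \<and> valid r' \<and> N r' \<inter> Z = {} \<and> k < length r' \<and> k \<in> set r'"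
proof -
  obtain r1 where r1: "pfx r r1" "valid r1" "N r1 \<inter> Z = {}" using r Z unfolding nwd_def by blast
  obtain g where g: "g \<in> N r1" using r1(2) unfolding valid_def by blast
  then have gG: "g \<in> G" and r1e: "r1 = map g [0..<length r1]" by (auto simp: N_def)
  define L where "L = max (length r1) (max (Suc k) (Suc (inv g k)))"
  define r' where "r' = map g [0..<L]"
  have "pfx r1 r'" unfolding r'_def using pfx_map_upt[of "length r1" L g] r1e L_def by simp
  then have p: "pfx r r'" using r1(1) pfx_trans by blast
  have v: "valid r'" unfolding r'_def using gG by (rule valid_map)
  have "N r' \<subseteq> N r1" using \<open>pfx r1 r'\<close> by (rule N_mono)
  then have c1: "N r' \<inter> Z = {}" using r1(3) by blast
  have c2: "k < length r'" unfolding r'_def L_def by simp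
  have gk: "g (inv g k) = k" using G_surj[OF gG] by (simp add: surj_f_inv_f)
  have "inv g k < L" unfolding L_def by simp
  then have "g (inv g k) \<in> set r'" unfolding r'_def by simp
  then have c3: "k \<in> set r'" using gk by simp
  show ?thesis by (rule exI[of _ r']) (use p v c1 c2 c3 in simp)
qed

theorem baire:
  assumes q: "valid q" shows "\<not> meager (N q)"
proof
  assume "meager (N q)"
  then have "\<exists>Z. (\<forall>k::nat. nwd (Z k)) \<and> N q \<inter> G \<subseteq> (\<Union>k. Z k)" by (simp only: meager_def)
  then obtain Z :: "nat \<Rightarrow> _" where Z: "\<And>k. nwd (Z k)" "N q \<inter> G \<subseteq> (\<Union>k. Z k)" unfolding meager_def by blast
  define P where "P k r r' \<longleftrightarrow> pfx r r' \<and> valid r' \<and> N r' \<inter> Z k = {} \<and> k < length r' \<and> k \<in> set r'" for k r r'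
  define qs where "qs = rec_nat q (\<lambda>k r. SOME r'. P k r r')"
  have qs0: "qs 0 = q" and qsS: "qs (Suc k) = (SOME r'. P k (qs k) r')" for k by (simp_all add: qs_def)
  have vP: "valid (qs k) \<and> P k (qs k) (qs (Suc k))" for k
  proof (induction k)
    case 0
    have "\<exists>r'. P 0 (qs 0) r'" using step_ext[OF q Z(1), of 0] unfolding P_def qs0 .
    then have "P 0 (qs 0) (qs (Suc 0))" unfolding qsS by (rule someI_ex)
    then show ?case using q qs0 by simp
  next
    case (Suc k)
    then have v: "valid (qs (Suc k))" unfolding P_def by blast
    have "\<exists>r'. P (Suc k) (qs (Suc k)) r'" using step_ext[OF v Z(1), of "Suc k"] unfolding P_def .
    then have "P (Suc k) (qs (Suc k)) (qs (Suc (Suc k)))" unfolding qsS[of "Suc k"] by (rule someI_ex)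
    then show ?case using v by simp
  qed
  have valid_qs: "valid (qs k)" for k using vP by blast
  have Pk: "pfx (qs k) (qs (Suc k))" "N (qs (Suc k)) \<inter> Z k = {}" "k < length (qs (Suc k))" "k \<in> set (qs (Suc k))" for k
    using vP[of k] unfolding P_def by blast+
  have chain: "pfx (qs k) (qs m)" if "k \<le> m" for k m
    using that
  proof (induction m rule: dec_induct)
    case base then show ?case by simp
  next
    case (step n) then show ?case using Pk(1)[of n] pfx_trans by blast
  qed
  have comp: "pfx (qs k) (qs m) \<or> pfx (qs m) (qs k)" for k m
    using chain by (cases "k \<le> m") auto
  define h where "h n = qs (Suc n) ! n" for n
  have hN: "h i = qs m ! i" if "i < length (qs m)" for i m
  proof (cases "Suc i \<le> m")
    case True
    have "qs m ! i = qs (Suc i) ! i" using chain[OF True] Pk(3)[of i] by (rule pfx_nth)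
    then show ?thesis unfolding h_def by simp
  next
    case False
    then have "m \<le> Suc i" by simp
    have "qs (Suc i) ! i = qs m ! i" using chain[OF \<open>m \<le> Suc i\<close>] that by (rule pfx_nth)
    then show ?thesis unfolding h_def by simp
  qed
  have lenm: "x < length (qs m)" if "Suc x \<le> m" for x m
    using Pk(3)[of x] pfx_length[OF chain[OF that]] by simp
  have setm: "x \<in> set (qs m)" if "Suc x \<le> m" for x m
    using Pk(4)[of x] pfx_set[OF chain[OF that]] by blast
  have injh: "inj h"
  proof (rule injI)
    fix i j assume e: "h i = h j"
    define m where "m = Suc (max i j)"
    have "i < length (qs m)" "j < length (qs m)" using lenm unfolding m_def by simp_all
    moreover have "distinct (qs m)" using valid_qs by (rule valid_distinct)
    moreover have "qs m ! i = qs m ! j" using e hN calculation(1,2) by metis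
    ultimately show "i = j" by (simp add: nth_eq_iff_index_eq)
  qed
  have surjh: "surj h"
  proof -
    have "y \<in> range h" for y
    proof -
      obtain i where "i < length (qs (Suc y))" "qs (Suc y) ! i = y" using Pk(4)[of y] by (metis in_set_conv_nth)
      then have "h i = y" using hN by simp
      then show ?thesis by blast
    qed
    then show ?thesis by blast
  qed
  have FRh: "map h ` FR i = FR i" for i
  proof
    show "map h ` FR i \<subseteq> FR i"
    proof
      fix ys assume "ys \<in> map h ` FR i"
      then obtain xs where xs: "xs \<in> FR i" "ys = map h xs" by blast
      define m where "m = Suc (sum_list xs)"
      obtain g where g: "g \<in> N (qs m)" using valid_qs unfolding valid_def by blast
      have "h x = g x" if "x \<in> set xs" for x
      proof -
        have "x < length (qs m)" using lenm member_le_sum_list[OF that] unfolding m_def by simp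
        then have "h x = qs m ! x" "g x = qs m ! x" by (rule hN, rule N_nth[OF g])
        then show ?thesis by simp
      qed
      then have "ys = map g xs" using xs by simp
      moreover have "g \<in> G" using g N_sub by blast
      ultimately show "ys \<in> FR i" using xs G_FR by blast
    qed
  next
    show "FR i \<subseteq> map h ` FR i"
    proof
      fix ys assume ys: "ys \<in> FR i"
      define m where "m = Suc (sum_list ys)"
      obtain g where g: "g \<in> N (qs m)" using valid_qs unfolding valid_def by blast
      have gG: "g \<in> G" using g N_sub by blast
      then have "ys \<in> map g ` FR i" using ys G_FR by simp
      then obtain xs where xs: "xs \<in> FR i" "ys = map g xs" by blast
      have "h x = g x" if x: "x \<in> set xs" for x
      proof -
        have gx: "g x \<in> set ys" using xs x by simp
        have "g x \<in> set (qs m)" using setm member_le_sum_list[OF gx] unfolding m_def by simp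
        then obtain j where j: "j < length (qs m)" "qs m ! j = g x" by (metis in_set_conv_nth)
        then have "g j = g x" using N_nth[OF g] by simp
        then have "j = x" using G_inj[OF gG] by (simp add: inj_eq)
        then show ?thesis using j hN by simp
      qed
      then have "ys = map h xs" using xs by simp
      then show "ys \<in> map h ` FR i" using xs by blast
    qed
  qed
  have hG: "h \<in> G" using injh surjh FRh by (simp add: Aut_def bij_def)
  have hN': "h \<in> N (qs m)" for m using hG hN by (simp add: N_iff)
  then have "h \<in> N q \<inter> G" using hN'[of 0] qs0 hG by simp
  then obtain k where "h \<in> Z k" using Z(2) by blast
  then show False using hN'[of "Suc k"] Pk(2)[of k] by blast
qed

lemma localize:
  assumes H: "\<And>r. pfx q r \<Longrightarrow> valid r \<Longrightarrow> \<exists>s. pfx r s \<and> valid s \<and> meager (C \<inter> N s)"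
  shows "meager (C \<inter> N q)"
proof -
  define E where "E = {s. pfx q s \<and> valid s \<and> meager (C \<inter> N s)}"
  define Z where "Z = N q - (\<Union>s\<in>E. N s)"
  have "nwd Z" unfolding nwd_def
  proof (intro allI impI)
    fix r assume r: "valid r"
    show "\<exists>s. pfx r s \<and> valid s \<and> N s \<inter> Z = {}"
    proof (cases "pfx q r")
      case True
      then obtain s where "pfx r s" "valid s" "meager (C \<inter> N s)" using H r by blast
      moreover have "s \<in> E" using calculation True pfx_trans unfolding E_def by blast
      ultimately show ?thesis unfolding Z_def by blast
    next
      case nqr: False
      show ?thesis
      proof (cases "pfx r q")
        case True
        show ?thesis
        proof (cases "valid q")
          case True
          then obtain s where "pfx q s" "valid s" "meager (C \<inter> N s)" using H pfx_refl by blast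
          moreover have "s \<in> E" using calculation unfolding E_def by blast
          moreover have "pfx r s" using \<open>pfx r q\<close> calculation(1) pfx_trans by blast
          ultimately show ?thesis unfolding Z_def by blast
        next
          case False
          then have "N q = {}" unfolding valid_def by blast
          then show ?thesis using r pfx_refl unfolding Z_def by blast
        qed
      next
        case False
        then have "N q \<inter> N r = {}" using nqr N_incomp by blast
        then show ?thesis using r pfx_refl unfolding Z_def by blast
      qed
    qed
  qed
  then have mZ: "meager Z" by (rule meager_nwd)
  have mU: "meager (\<Union>s::nat list. if s \<in> E then C \<inter> N s else {})"
    by (rule meager_UN_countable) (auto simp: E_def meager_empty)
  have "C \<inter> N q \<subseteq> (\<Union>s::nat list. if s \<in> E then C \<inter> N s else {}) \<union> Z"
  proof
    fix h assume h: "h \<in> C \<inter> N q"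
    show "h \<in> (\<Union>s::nat list. if s \<in> E then C \<inter> N s else {}) \<union> Z"
    proof (cases "\<exists>s\<in>E. h \<in> N s")
      case True
      then obtain s where "s \<in> E" "h \<in> N s" by blast
      then have "h \<in> (if s \<in> E then C \<inter> N s else {})" using h by simp
      then show ?thesis by blast
    next
      case False
      then show ?thesis using h unfolding Z_def by blast
    qed
  qed
  then show ?thesis using meager_Un[OF mU mZ] meager_mono by blast
qed

end

definition asg :: "nat list \<Rightarrow> nat \<Rightarrow> nat" where "asg a = (\<lambda>i. if i < length a then a ! i else 0)"
definition M0 :: "nat \<Rightarrow> nat list \<Rightarrow> bool" where "M0 = (\<lambda>_ _. False)"

lemma list_positions: "set ys \<subseteq> set L \<Longrightarrow> \<exists>ps. (\<forall>p\<in>set ps. p < length L) \<and> map (\<lambda>p. L ! p) ps = ys"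
proof (induction ys)
  case Nil then show ?case by simp
next
  case (Cons y ys)
  then obtain ps where ps: "\<forall>p\<in>set ps. p < length L" "map (\<lambda>p. L ! p) ps = ys" by auto
  obtain p where "p < length L" "L ! p = y" using Cons.prems by (metis in_set_conv_nth insert_subset list.simps(15))
  then show ?case using ps by (intro exI[of _ "p # ps"]) simp
qed

context LE begin

definition sim :: "nat list \<Rightarrow> nat list \<Rightarrow> bool" where
  "sim a b \<longleftrightarrow> length a = length b \<and> (\<forall>\<xi>. pure \<xi> \<longrightarrow> wf_form S ar FA \<xi> \<longrightarrow> fv \<xi> \<subseteq> {..<length a} \<longrightarrow>
      (sat FR M0 (asg a) \<xi> \<longleftrightarrow> sat FR M0 (asg b) \<xi>))"

lemma sim_D: "sim a b \<Longrightarrow> pure \<xi> \<Longrightarrow> wf_form S ar FA \<xi> \<Longrightarrow> fv \<xi> \<subseteq> {..<length a} \<Longrightarrow> sat FR M0 (asg a) \<xi> = sat FR M0 (asg b) \<xi>"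
  unfolding sim_def by blast

lemma sim_sym: "sim a b \<Longrightarrow> sim b a"
  unfolding sim_def by auto

lemma sep:
  assumes "length a = length b" "\<not> sim a b"
  shows "\<exists>\<xi>. pure \<xi> \<and> wf_form S ar FA \<xi> \<and> fv \<xi> \<subseteq> {..<length a} \<and> sat FR M0 (asg a) \<xi> \<and> \<not> sat FR M0 (asg b) \<xi>"
proof -
  obtain \<xi> where c: "pure \<xi>" "wf_form S ar FA \<xi>" "fv \<xi> \<subseteq> {..<length a}"
    "\<not> (sat FR M0 (asg a) \<xi> \<longleftrightarrow> sat FR M0 (asg b) \<xi>)" using assms unfolding sim_def by blast
  show ?thesis
  proof (cases "sat FR M0 (asg a) \<xi>")
    case True then show ?thesis using c by blast
  next
    case False
    then have "sat FR M0 (asg a) (Neg \<xi>) \<and> \<not> sat FR M0 (asg b) (Neg \<xi>)" using c by simp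
    then show ?thesis using c by (intro exI[of _ "Neg \<xi>"]) simp
  qed
qed

lemma sat_invariant:
  assumes g: "g \<in> G" shows "pure \<xi> \<Longrightarrow> sat FR M (g \<circ> e) \<xi> = sat FR M e \<xi>"
proof (induction \<xi> arbitrary: e)
  case (Rel R vs) then show ?case by simp
next
  case (FRel i vs)
  have "map g (map e vs) \<in> FR i \<longleftrightarrow> map e vs \<in> FR i"
  proof
    assume "map g (map e vs) \<in> FR i"
    then have "map g (map e vs) \<in> map g ` FR i" using G_FR[OF g] by simp
    then obtain zs where "zs \<in> FR i" "map g zs = map g (map e vs)" by auto
    then show "map e vs \<in> FR i" using G_inj[OF g] by (metis inj_map_eq_map)
  next
    assume "map e vs \<in> FR i"
    then show "map g (map e vs) \<in> FR i" using G_FR[OF g] by blast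
  qed
  then show ?case by (simp add: o_def)
next
  case (Eq u v) then show ?case using G_inj[OF g] by (simp add: inj_eq)
next
  case (Neg \<phi>)
  have "sat FR M (g \<circ> e) \<phi> = sat FR M e \<phi>" by (rule Neg.IH) (use Neg.prems in simp)
  then show ?case by (simp only: sat.simps)
next
  case (BigAnd f)
  have "sat FR M (g \<circ> e) (f n) = sat FR M e (f n)" for n by (rule BigAnd.IH) (use BigAnd.prems in auto)
  then show ?case by (simp only: sat.simps)
next
  case (BigOr f)
  have "sat FR M (g \<circ> e) (f n) = sat FR M e (f n)" for n by (rule BigOr.IH) (use BigOr.prems in auto)
  then show ?case by (simp only: sat.simps)
next
  case (Ex v \<phi>)
  have IH: "sat FR M (g \<circ> (e(v := a))) \<phi> = sat FR M (e(v := a)) \<phi>" for a by (rule Ex.IH) (use Ex.prems in simp)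
  have eq: "g \<circ> (e(v := a)) = (g \<circ> e)(v := g a)" for a by auto
  have "(\<exists>b. sat FR M ((g \<circ> e)(v := b)) \<phi>) \<longleftrightarrow> (\<exists>a. sat FR M ((g \<circ> e)(v := g a)) \<phi>)"
    using G_surj[OF g] by (metis surjD)
  moreover have IH': "sat FR M ((g \<circ> e)(v := g a)) \<phi> = sat FR M (e(v := a)) \<phi>" for a using IH[of a] unfolding eq .
  ultimately show ?case by (simp only: sat.simps)
next
  case (All v \<phi>)
  have IH: "sat FR M (g \<circ> (e(v := a))) \<phi> = sat FR M (e(v := a)) \<phi>" for a by (rule All.IH) (use All.prems in simp)
  have eq: "g \<circ> (e(v := a)) = (g \<circ> e)(v := g a)" for a by auto
  have "(\<forall>b. sat FR M ((g \<circ> e)(v := b)) \<phi>) \<longleftrightarrow> (\<forall>a. sat FR M ((g \<circ> e)(v := g a)) \<phi>)"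
    using G_surj[OF g] by (metis surjD)
  moreover have IH': "sat FR M ((g \<circ> e)(v := g a)) \<phi> = sat FR M (e(v := a)) \<phi>" for a using IH[of a] unfolding eq .
  ultimately show ?case by (simp only: sat.simps)
qed

lemma asg_snoc: "v < Suc (length a) \<Longrightarrow> ((asg a)(length a := c)) v = asg (a @ [c]) v"
  by (auto simp: asg_def nth_append)

lemma sim_ext:
  assumes ab: "sim a b" shows "\<exists>d. sim (a @ [c]) (b @ [d])"
proof (rule ccontr)
  assume H: "\<not> (\<exists>d. sim (a @ [c]) (b @ [d]))"
  define m where "m = length a"
  have lb: "length b = m" using ab unfolding sim_def m_def by simp
  define Q where "Q d \<xi> \<longleftrightarrow> pure \<xi> \<and> wf_form S ar FA \<xi> \<and> fv \<xi> \<subseteq> {..<Suc m} \<and> sat FR M0 (asg (a@[c])) \<xi> \<and> \<not> sat FR M0 (asg (b@[d])) \<xi>" for d \<xi>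
  have ex: "\<exists>\<xi>. Q d \<xi>" for d
    using sep[of "a@[c]" "b@[d]"] H lb unfolding Q_def m_def by auto
  define chi where "chi d = (SOME \<xi>. Q d \<xi>)" for d
  have chi: "Q d (chi d)" for d unfolding chi_def using ex by (rule someI_ex)
  define \<Phi> where "\<Phi> = Ex m (BigAnd chi)"
  have p\<Phi>: "pure \<Phi>" "wf_form S ar FA \<Phi>" using chi unfolding \<Phi>_def Q_def by auto
  have f\<Phi>: "fv \<Phi> \<subseteq> {..<length a}" using chi unfolding \<Phi>_def Q_def m_def by fastforce
  have tr: "sat FR M0 ((asg x)(m := y)) (chi d) = sat FR M0 (asg (x @ [y])) (chi d)" if "length x = m" for x y d
  proof (rule sat_cong)
    fix v assume v: "v \<in> fv (chi d)"
    then have "v < Suc (length x)" using chi[of d] that by (auto simp: Q_def)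
    then show "((asg x)(m := y)) v = asg (x @ [y]) v" using asg_snoc[of v x y] that by simp
  qed
  have "sat FR M0 (asg a) \<Phi>"
    unfolding \<Phi>_def using tr[of a c] chi m_def by (auto simp: Q_def intro!: exI[of _ c])
  then have "sat FR M0 (asg b) \<Phi>" using ab p\<Phi> f\<Phi> unfolding sim_def by blast
  then obtain d where "\<forall>k. sat FR M0 ((asg b)(m := d)) (chi k)" unfolding \<Phi>_def by auto
  then have "sat FR M0 (asg (b @ [d])) (chi d)" using tr[OF lb] by blast
  then show False using chi[of d] unfolding Q_def by blast
qed

lemma sim_Eq:
  assumes "sim a b" "i < length a" "j < length a"
  shows "a ! i = a ! j \<longleftrightarrow> b ! i = b ! j"
proof -
  have "sat FR M0 (asg a) (Eq i j) \<longleftrightarrow> sat FR M0 (asg b) (Eq i j)" by (rule sim_D) (use assms in auto)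
  moreover have "length b = length a" using assms unfolding sim_def by simp
  ultimately show ?thesis using assms by (simp add: asg_def)
qed

lemma sim_FRel:
  assumes "sim a b" "\<forall>p\<in>set ps. p < length a" "length ps = FA i"
  shows "map (\<lambda>p. a ! p) ps \<in> FR i \<longleftrightarrow> map (\<lambda>p. b ! p) ps \<in> FR i"
proof -
  have "sat FR M0 (asg a) (FRel i ps) \<longleftrightarrow> sat FR M0 (asg b) (FRel i ps)" by (rule sim_D) (use assms in auto)
  moreover have "length b = length a" using assms unfolding sim_def by simp
  moreover have "map (asg a) ps = map (\<lambda>p. a ! p) ps" "map (asg b) ps = map (\<lambda>p. b ! p) ps"
    using assms calculation(2) by (auto simp: asg_def)
  ultimately show ?thesis by simp
qed

end

definition pos :: "nat list \<Rightarrow> nat \<Rightarrow> nat" where "pos L x = (SOME i. i < length L \<and> L ! i = x)"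

lemma pos_spec: "x \<in> set L \<Longrightarrow> pos L x < length L \<and> L ! pos L x = x"
  unfolding pos_def by (rule someI_ex) (simp add: in_set_conv_nth)

context LE begin

lemma zigzag:
  assumes ab: "sim a b"
  shows "\<exists>g\<in>G. \<forall>i<length a. g (a ! i) = b ! i"
proof -
  define stA where "stA p k = (if k \<in> set (fst p) then p else (fst p @ [k], snd p @ [SOME d. sim (fst p @ [k]) (snd p @ [d])]))"
    for p :: "nat list \<times> nat list" and k
  define stB where "stB p k = (if k \<in> set (snd p) then p else (fst p @ [SOME c. sim (fst p @ [c]) (snd p @ [k])], snd p @ [k]))"
    for p :: "nat list \<times> nat list" and k
  have stAp: "sim (fst (stA p k)) (snd (stA p k)) \<and> pfx (fst p) (fst (stA p k)) \<and> pfx (snd p) (snd (stA p k)) \<and> k \<in> set (fst (stA p k))"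
    if s: "sim (fst p) (snd p)" for p k
  proof (cases "k \<in> set (fst p)")
    case True then show ?thesis using s by (simp add: stA_def)
  next
    case False
    have "\<exists>d. sim (fst p @ [k]) (snd p @ [d])" using sim_ext[OF s] .
    then have "sim (fst p @ [k]) (snd p @ [SOME d. sim (fst p @ [k]) (snd p @ [d])])" by (rule someI_ex)
    then show ?thesis using False by (simp add: stA_def)
  qed
  have stBp: "sim (fst (stB p k)) (snd (stB p k)) \<and> pfx (fst p) (fst (stB p k)) \<and> pfx (snd p) (snd (stB p k)) \<and> k \<in> set (snd (stB p k))"
    if s: "sim (fst p) (snd p)" for p k
  proof (cases "k \<in> set (snd p)")
    case True then show ?thesis using s by (simp add: stB_def)
  next
    case False
    have "\<exists>c. sim (snd p @ [k]) (fst p @ [c])" using sim_ext[OF sim_sym[OF s]] .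
    then have "\<exists>c. sim (fst p @ [c]) (snd p @ [k])" using sim_sym by blast
    then have "sim (fst p @ [SOME c. sim (fst p @ [c]) (snd p @ [k])]) (snd p @ [k])" by (rule someI_ex)
    then show ?thesis using False by (simp add: stB_def)
  qed
  define sq where "sq = rec_nat (a, b) (\<lambda>k p. stB (stA p k) k)"
  have sq0: "sq 0 = (a, b)" and sqS: "sq (Suc k) = stB (stA (sq k) k) k" for k by (simp_all add: sq_def)
  define A where "A k = fst (sq k)" for k
  define B where "B k = snd (sq k)" for k
  have simk: "sim (A k) (B k)" for k
  proof (induction k)
    case 0 then show ?case using ab sq0 by (simp add: A_def B_def)
  next
    case (Suc k)
    then have "sim (fst (stA (sq k) k)) (snd (stA (sq k) k))" using stAp unfolding A_def B_def by blast
    then show ?case using stBp unfolding A_def B_def sqS by blast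
  qed
  have stepk: "pfx (A k) (A (Suc k)) \<and> pfx (B k) (B (Suc k)) \<and> k \<in> set (A (Suc k)) \<and> k \<in> set (B (Suc k))" for k
  proof -
    have s: "sim (fst (sq k)) (snd (sq k))" using simk unfolding A_def B_def by blast
    note a1 = stAp[OF s, of k]
    note b1 = stBp[OF conjunct1[OF a1], of k]
    show ?thesis unfolding A_def B_def sqS using a1 b1 pfx_trans pfx_set by blast
  qed
  have lenAB: "length (A k) = length (B k)" for k using simk unfolding sim_def by blast
  have chain: "pfx (A k) (A m) \<and> pfx (B k) (B m)" if "k \<le> m" for k m
    using that
  proof (induction m rule: dec_induct)
    case base then show ?case by simp
  next
    case (step n) then show ?case using stepk[of n] pfx_trans by blast
  qed
  have inA: "x \<in> set (A m)" if "Suc x \<le> m" for x m using stepk[of x] chain[OF that] pfx_set by blast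
  have inB: "x \<in> set (B m)" if "Suc x \<le> m" for x m using stepk[of x] chain[OF that] pfx_set by blast
  define g where "g x = B (Suc x) ! pos (A (Suc x)) x" for x
  have gA: "g (A k ! i) = B k ! i" if i: "i < length (A k)" for k i
  proof -
    define x where "x = A k ! i"
    define K where "K = Suc x"
    define i' where "i' = pos (A K) x"
    have i': "i' < length (A K)" "A K ! i' = x" using pos_spec[OF inA[of x K]] unfolding i'_def K_def by auto
    define m where "m = max k K"
    have c1: "pfx (A k) (A m)" "pfx (B k) (B m)" using chain[of k m] unfolding m_def by auto
    have c2: "pfx (A K) (A m)" "pfx (B K) (B m)" using chain[of K m] unfolding m_def by auto
    have "A m ! i = x" using pfx_nth[OF c1(1) i] unfolding x_def by simp
    moreover have "A m ! i' = x" using pfx_nth[OF c2(1) i'(1)] i'(2) by simp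
    moreover have "i < length (A m)" "i' < length (A m)" using i i'(1) pfx_length c1(1) c2(1) by (auto dest: pfx_length)
    ultimately have "B m ! i = B m ! i'" using sim_Eq[OF simk[of m]] by metis
    moreover have "B m ! i = B k ! i" using pfx_nth[OF c1(2)] i lenAB by simp
    moreover have "B m ! i' = B K ! i'" using pfx_nth[OF c2(2)] i'(1) lenAB by simp
    ultimately have "B K ! i' = B k ! i" by simp
    then show ?thesis unfolding g_def x_def[symmetric] K_def[symmetric] i'_def[symmetric] .
  qed
  have injg: "inj g"
  proof (rule injI)
    fix x y assume e: "g x = g y"
    define K where "K = Suc (max x y)"
    obtain i j where ij: "i < length (A K)" "A K ! i = x" "j < length (A K)" "A K ! j = y"
      using pos_spec[OF inA[of x K]] pos_spec[OF inA[of y K]] unfolding K_def by auto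
    have "B K ! i = B K ! j" using e gA[OF ij(1)] gA[OF ij(3)] ij(2,4) by simp
    then have "A K ! i = A K ! j" using sim_Eq[OF simk[of K] ij(1,3)] by simp
    then show "x = y" using ij by simp
  qed
  have surjg: "surj g"
  proof -
    have "y \<in> range g" for y
    proof -
      obtain j where j: "j < length (B (Suc y))" "B (Suc y) ! j = y" using pos_spec[OF inB[of y "Suc y"]] by auto
      then have "g (A (Suc y) ! j) = y" using gA lenAB by metis
      then show ?thesis using rangeI[of g "A (Suc y) ! j"] by simp
    qed
    then show ?thesis by blast
  qed
  have FRg: "map g ` FR i = FR i" for i
  proof
    show "map g ` FR i \<subseteq> FR i"
    proof
      fix ys assume "ys \<in> map g ` FR i"
      then obtain xs where xs: "xs \<in> FR i" "ys = map g xs" by blast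
      define K where "K = Suc (sum_list xs)"
      have "set xs \<subseteq> set (A K)"
      proof
        fix x assume "x \<in> set xs"
        then have "x \<le> sum_list xs" by (rule member_le_sum_list) simp
        then show "x \<in> set (A K)" using inA unfolding K_def by simp
      qed
      then obtain ps where ps: "\<forall>p\<in>set ps. p < length (A K)" "map (\<lambda>p. A K ! p) ps = xs" using list_positions by blast
      have "length xs = FA i" using xs(1) FR_sub[of i] unfolding tuples_def by blast
      then have len: "length ps = FA i" using ps(2) by (metis length_map)
      have "map (\<lambda>p. B K ! p) ps = ys"
      proof -
        have "map (\<lambda>p. B K ! p) ps = map (\<lambda>p. g (A K ! p)) ps" using ps(1) gA by simp
        also have "\<dots> = map g xs" using ps(2) by auto
        finally show ?thesis using xs by simp
      qed
      then show "ys \<in> FR i" using sim_FRel[OF simk ps(1) len] xs ps(2) by simp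
    qed
  next
    show "FR i \<subseteq> map g ` FR i"
    proof
      fix ys assume ys: "ys \<in> FR i"
      define K where "K = Suc (sum_list ys)"
      have "set ys \<subseteq> set (B K)"
      proof
        fix x assume "x \<in> set ys"
        then have "x \<le> sum_list ys" by (rule member_le_sum_list) simp
        then show "x \<in> set (B K)" using inB unfolding K_def by simp
      qed
      then obtain ps where ps: "\<forall>p\<in>set ps. p < length (B K)" "map (\<lambda>p. B K ! p) ps = ys" using list_positions by blast
      have ps': "\<forall>p\<in>set ps. p < length (A K)" using ps(1) lenAB by simp
      have "length ys = FA i" using ys FR_sub[of i] unfolding tuples_def by blast
      then have len: "length ps = FA i" using ps(2) by (metis length_map)
      define xs where "xs = map (\<lambda>p. A K ! p) ps"
      have "xs \<in> FR i" using sim_FRel[OF simk ps' len] ys ps(2) unfolding xs_def by simp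
      moreover have "map g xs = ys"
      proof -
        have "map g xs = map (\<lambda>p. g (A K ! p)) ps" unfolding xs_def by simp
        also have "\<dots> = map (\<lambda>p. B K ! p) ps" using ps' gA by simp
        finally show ?thesis using ps(2) by simp
      qed
      ultimately show "ys \<in> map g ` FR i" by blast
    qed
  qed
  have "g \<in> G" using injg surjg FRg by (simp add: Aut_def bij_def)
  moreover have "\<forall>i<length a. g (a ! i) = b ! i" using gA[of _ 0] sq0 unfolding A_def B_def by simp
  ultimately show ?thesis by blast
qed

lemma valid_sim: "valid q \<longleftrightarrow> sim [0..<length q] q"
proof
  assume "valid q"
  then obtain g where g: "g \<in> N q" unfolding valid_def by blast
  have gG: "g \<in> G" using g N_sub by blast
  show "sim [0..<length q] q" unfolding sim_def
  proof (intro conjI allI impI)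
    fix \<xi> assume p: "pure \<xi>" and "wf_form S ar FA \<xi>" and f: "fv \<xi> \<subseteq> {..<length [0..<length q]}"
    have "sat FR M0 (asg [0..<length q]) \<xi> = sat FR M0 (g \<circ> asg [0..<length q]) \<xi>"
      using sat_invariant[OF gG p] by simp
    also have "\<dots> = sat FR M0 (asg q) \<xi>"
    proof (rule sat_cong)
      fix v assume "v \<in> fv \<xi>"
      then have "v < length q" using f by auto
      then show "(g \<circ> asg [0..<length q]) v = asg q v" using N_nth[OF g] by (simp add: asg_def)
    qed
    finally show "sat FR M0 (asg [0..<length q]) \<xi> = sat FR M0 (asg q) \<xi>" .
  qed simp
next
  assume "sim [0..<length q] q"
  then obtain g where "g \<in> G" "\<forall>i<length q. g ([0..<length q] ! i) = q ! i" using zigzag by fastforce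
  then have "g \<in> N q" by (simp add: N_iff)
  then show "valid q" unfolding valid_def by blast
qed

definition psi :: "nat \<Rightarrow> form" where
  "psi n = BigAnd (\<lambda>k. if length (from_nat k :: nat list) = n \<and> \<not> sim [0..<n] (from_nat k)
      then (SOME \<xi>. pure \<xi> \<and> wf_form S ar FA \<xi> \<and> fv \<xi> \<subseteq> {..<n} \<and> sat FR M0 (asg [0..<n]) \<xi> \<and> \<not> sat FR M0 (asg (from_nat k)) \<xi>)
      else FTrue)"

lemma defs_psi: "defs n (psi n) (\<lambda>M q. valid q)"
proof -
  define ch where "ch k = (if length (from_nat k :: nat list) = n \<and> \<not> sim [0..<n] (from_nat k)
      then (SOME \<xi>. pure \<xi> \<and> wf_form S ar FA \<xi> \<and> fv \<xi> \<subseteq> {..<n} \<and> sat FR M0 (asg [0..<n]) \<xi> \<and> \<not> sat FR M0 (asg (from_nat k)) \<xi>)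
      else FTrue)" for k
  have psi: "psi n = BigAnd ch" unfolding psi_def ch_def ..
  have chp: "pure (ch k) \<and> wf_form S ar FA (ch k) \<and> fv (ch k) \<subseteq> {..<n} \<and> sat FR M0 (asg [0..<n]) (ch k) \<and>
     (length (from_nat k :: nat list) = n \<and> \<not> sim [0..<n] (from_nat k) \<longrightarrow> \<not> sat FR M0 (asg (from_nat k)) (ch k))" for k
  proof (cases "length (from_nat k :: nat list) = n \<and> \<not> sim [0..<n] (from_nat k)")
    case True
    define Pk where "Pk \<xi> \<longleftrightarrow> pure \<xi> \<and> wf_form S ar FA \<xi> \<and> fv \<xi> \<subseteq> {..<n} \<and> sat FR M0 (asg [0..<n]) \<xi> \<and> \<not> sat FR M0 (asg (from_nat k)) \<xi>" for \<xi>
    have "\<exists>\<xi>. Pk \<xi>"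
      using sep[of "[0..<n]" "from_nat k"] True unfolding Pk_def by simp
    then have "Pk (Eps Pk)" by (rule someI_ex)
    moreover have "ch k = Eps Pk" unfolding ch_def Pk_def using True by simp
    ultimately have "Pk (ch k)" by simp
    then have "pure (ch k) \<and> wf_form S ar FA (ch k) \<and> fv (ch k) \<subseteq> {..<n} \<and> sat FR M0 (asg [0..<n]) (ch k) \<and> \<not> sat FR M0 (asg (from_nat k)) (ch k)"
      unfolding Pk_def .
    then show ?thesis by blast
  next
    case False
    have "ch k = FTrue" unfolding ch_def by (rule if_not_P[OF False])
    then show ?thesis using False by simp
  qed
  have tr: "sat FR M e (ch k) = sat FR M0 (asg (map e [0..<n])) (ch k)" for M e k
  proof -
    have "sat FR M e (ch k) = sat FR M (asg (map e [0..<n])) (ch k)"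
    proof (rule sat_cong)
      fix v assume "v \<in> fv (ch k)" then have "v < n" using chp[of k] by auto
      then show "e v = asg (map e [0..<n]) v" by (simp add: asg_def)
    qed
    also have "\<dots> = sat FR M0 (asg (map e [0..<n])) (ch k)" using chp[of k] sat_pure by blast
    finally show ?thesis .
  qed
  show ?thesis unfolding defs_def psi
  proof (intro conjI ballI allI)
    show "wf_form S ar FA (BigAnd ch)" using chp by simp
    show "fv (BigAnd ch) \<subseteq> {..<n}" using chp by auto
    fix M and e :: "nat \<Rightarrow> nat"
    define q where "q = map e [0..<n]"
    have lq: "length q = n" unfolding q_def by simp
    show "sat FR M e (BigAnd ch) \<longleftrightarrow> valid (map e [0..<n])"
    proof
      assume a: "sat FR M e (BigAnd ch)"
      show "valid (map e [0..<n])"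
      proof (rule ccontr)
        assume "\<not> valid (map e [0..<n])"
        then have ns: "\<not> sim [0..<n] q" using valid_sim lq unfolding q_def by simp
        have "sat FR M e (ch (to_nat q))" using a by simp
        then have "sat FR M0 (asg q) (ch (to_nat q))" using tr[of M e] unfolding q_def by simp
        then show False using chp[of "to_nat q"] ns lq by simp
      qed
    next
      assume "valid (map e [0..<n])"
      then have s: "sim [0..<n] q" using valid_sim lq unfolding q_def by simp
      have "sat FR M0 (asg q) (ch k)" for k
        using sim_D[OF s, of "ch k"] chp[of k] by simp
      then show "sat FR M e (BigAnd ch)" using tr[of M e] unfolding q_def by simp
    qed
  qed
qed

end

context LE begin

lemma X_eq: "X = (\<Pi>\<^sub>E R\<in>S. \<Pi>\<^sub>E xs\<in>tuples (ar R). (UNIV :: bool set))"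
  by (simp add: logic_space_def)

definition act :: "(nat \<Rightarrow> nat) \<Rightarrow> (nat \<Rightarrow> nat list \<Rightarrow> bool) \<Rightarrow> (nat \<Rightarrow> nat list \<Rightarrow> bool)" where
  "act h M = (\<lambda>R\<in>S. \<lambda>xs\<in>tuples (ar R). M R (map h xs))"

lemma act_X: "act h M \<in> X" unfolding X_eq act_def by auto

definition wfc :: "(nat \<times> nat list \<times> bool) list \<Rightarrow> bool" where
  "wfc c \<longleftrightarrow> (\<forall>R xs b. (R, xs, b) \<in> set c \<longrightarrow> R \<in> S \<and> length xs = ar R)"

definition basic :: "(nat \<times> nat list \<times> bool) list \<Rightarrow> (nat \<Rightarrow> nat list \<Rightarrow> bool) set" where
  "basic c = {M \<in> X. \<forall>R xs b. (R, xs, b) \<in> set c \<longrightarrow> M R xs = b}"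

lemma act_basic:
  assumes w: "wfc c"
  shows "act h M \<in> basic c \<longleftrightarrow> (\<forall>R xs b. (R, xs, b) \<in> set c \<longrightarrow> M R (map h xs) = b)"
proof -
  have e: "act h M R xs = M R (map h xs)" if "(R, xs, b) \<in> set c" for R xs b
    using w that unfolding wfc_def act_def tuples_def by auto
  have "act h M \<in> basic c \<longleftrightarrow> (\<forall>R xs b. (R, xs, b) \<in> set c \<longrightarrow> act h M R xs = b)"
    unfolding basic_def using act_X by simp
  also have "\<dots> \<longleftrightarrow> (\<forall>R xs b. (R, xs, b) \<in> set c \<longrightarrow> M R (map h xs) = b)"
    using e by metis
  finally show ?thesis .
qed

definition bnd :: "(nat \<times> nat list \<times> bool) list \<Rightarrow> nat" where
  "bnd c = Suc (sum_list (map (\<lambda>(R, xs, b). sum_list xs) c))"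

lemma bnd_less: "(R, xs, b) \<in> set c \<Longrightarrow> x \<in> set xs \<Longrightarrow> x < bnd c"
proof -
  assume a: "(R, xs, b) \<in> set c" "x \<in> set xs"
  have "x \<le> sum_list xs" using a(2) by (rule member_le_sum_list) simp
  moreover have "sum_list xs \<in> set (map (\<lambda>(R, xs, b). sum_list xs) c)" using a(1) by force
  then have "sum_list xs \<le> sum_list (map (\<lambda>(R, xs, b). sum_list xs) c)" by (rule member_le_sum_list) simp
  ultimately show ?thesis unfolding bnd_def by simp
qed

end

context LE begin
lemma open_basic:
  assumes U: "openin (logic_space S ar) U" and M: "M \<in> U"
  shows "\<exists>c. wfc c \<and> M \<in> basic c \<and> basic c \<subseteq> U"
proof -
  define inner where "inner R = product_topology (\<lambda>xs. discrete_topology (UNIV :: bool set)) (tuples (ar R))" for R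
  have ls: "logic_space S ar = product_topology inner S" unfolding logic_space_def inner_def ..
  have "\<forall>x\<in>U. \<exists>V. finite {R \<in> S. V R \<noteq> topspace (inner R)} \<and> (\<forall>R\<in>S. openin (inner R) (V R)) \<and>
    x \<in> Pi\<^sub>E S V \<and> Pi\<^sub>E S V \<subseteq> U"
    using U unfolding ls openin_product_topology_alt .
  then have "\<exists>V. finite {R \<in> S. V R \<noteq> topspace (inner R)} \<and> (\<forall>R\<in>S. openin (inner R) (V R)) \<and>
    M \<in> Pi\<^sub>E S V \<and> Pi\<^sub>E S V \<subseteq> U" using M by (rule bspec)
  then obtain V where V: "finite {R \<in> S. V R \<noteq> topspace (inner R)}" "\<forall>R\<in>S. openin (inner R) (V R)"
    "M \<in> Pi\<^sub>E S V" "Pi\<^sub>E S V \<subseteq> U" by (elim exE conjE) blast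
  have MX: "M \<in> X" using U M openin_subset by blast
  have "\<forall>R\<in>S. \<exists>W. finite {xs \<in> tuples (ar R). W xs \<noteq> UNIV} \<and> M R \<in> Pi\<^sub>E (tuples (ar R)) W \<and> Pi\<^sub>E (tuples (ar R)) W \<subseteq> V R"
  proof
    fix R assume R: "R \<in> S"
    have o: "openin (inner R) (V R)" and MR: "M R \<in> V R" using V(2,3) R by auto
    have "\<forall>x\<in>V R. \<exists>W. finite {i \<in> tuples (ar R). W i \<noteq> topspace (discrete_topology (UNIV::bool set))} \<and>
       (\<forall>i\<in>tuples (ar R). openin (discrete_topology UNIV) (W i)) \<and> x \<in> Pi\<^sub>E (tuples (ar R)) W \<and> Pi\<^sub>E (tuples (ar R)) W \<subseteq> V R"
      using o unfolding inner_def openin_product_topology_alt .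
    then have "\<exists>W. finite {i \<in> tuples (ar R). W i \<noteq> topspace (discrete_topology (UNIV::bool set))} \<and>
       (\<forall>i\<in>tuples (ar R). openin (discrete_topology UNIV) (W i)) \<and> M R \<in> Pi\<^sub>E (tuples (ar R)) W \<and> Pi\<^sub>E (tuples (ar R)) W \<subseteq> V R"
      using MR by (rule bspec)
    then obtain W where "finite {i \<in> tuples (ar R). W i \<noteq> topspace (discrete_topology (UNIV::bool set))}"
       "M R \<in> Pi\<^sub>E (tuples (ar R)) W" "Pi\<^sub>E (tuples (ar R)) W \<subseteq> V R" by blast
    then show "\<exists>W. finite {xs \<in> tuples (ar R). W xs \<noteq> UNIV} \<and> M R \<in> Pi\<^sub>E (tuples (ar R)) W \<and> Pi\<^sub>E (tuples (ar R)) W \<subseteq> V R"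
      by (intro exI[of _ W]) simp
  qed
  then have "\<exists>W. \<forall>R\<in>S. finite {xs \<in> tuples (ar R). W R xs \<noteq> UNIV} \<and> M R \<in> Pi\<^sub>E (tuples (ar R)) (W R) \<and> Pi\<^sub>E (tuples (ar R)) (W R) \<subseteq> V R"
    by (rule bchoice)
  then obtain W where W0: "\<forall>R\<in>S. finite {xs \<in> tuples (ar R). W R xs \<noteq> UNIV} \<and> M R \<in> Pi\<^sub>E (tuples (ar R)) (W R) \<and> Pi\<^sub>E (tuples (ar R)) (W R) \<subseteq> V R"
    by blast
  have W: "\<And>R. R \<in> S \<Longrightarrow> finite {xs \<in> tuples (ar R). W R xs \<noteq> UNIV}"
    "\<And>R. R \<in> S \<Longrightarrow> M R \<in> Pi\<^sub>E (tuples (ar R)) (W R)" "\<And>R. R \<in> S \<Longrightarrow> Pi\<^sub>E (tuples (ar R)) (W R) \<subseteq> V R"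
    using W0 by blast+
  define F1 where "F1 = {R \<in> S. V R \<noteq> topspace (inner R)}"
  define T where "T = Sigma F1 (\<lambda>R. {xs \<in> tuples (ar R). W R xs \<noteq> UNIV})"
  have "finite T" unfolding T_def using V(1) W(1) unfolding F1_def by (intro finite_SigmaI) auto
  then obtain l where l: "set l = T" using finite_list by blast
  define c where "c = map (\<lambda>(R, xs). (R, xs, M R xs)) l"
  have sc: "set c = (\<lambda>(R, xs). (R, xs, M R xs)) ` T" unfolding c_def l[symmetric] by simp
  have "wfc c" unfolding wfc_def sc T_def F1_def tuples_def by auto
  moreover have "M \<in> basic c" unfolding basic_def using MX sc by auto
  moreover have "basic c \<subseteq> U"
  proof
    fix M' assume M': "M' \<in> basic c"
    then have M'X: "M' \<in> X" unfolding basic_def by blast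
    have "M' \<in> Pi\<^sub>E S V"
    proof (rule PiE_I)
      fix R assume R: "R \<in> S"
      show "M' R \<in> V R"
      proof (cases "R \<in> F1")
        case False
        then have "V R = topspace (inner R)" using R unfolding F1_def by blast
        then show ?thesis using M'X R unfolding X_eq inner_def by auto
      next
        case True
        have "M' R \<in> Pi\<^sub>E (tuples (ar R)) (W R)"
        proof (rule PiE_I)
          fix xs assume xs: "xs \<in> tuples (ar R)"
          show "M' R xs \<in> W R xs"
          proof (cases "W R xs = UNIV")
            case True then show ?thesis by simp
          next
            case False
            then have "(R, xs) \<in> T" unfolding T_def using True xs by blast
            then have "(R, xs, M R xs) \<in> set c" unfolding sc by force
            then have "M' R xs = M R xs" using M' unfolding basic_def by blast
            moreover have "M R xs \<in> W R xs" using W(2)[OF R] xs by blast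
            ultimately show ?thesis by simp
          qed
        next
          fix xs assume "xs \<notin> tuples (ar R)"
          then show "M' R xs = undefined" using M'X R unfolding X_eq by (auto simp: PiE_def extensional_def)
        qed
        then show ?thesis using W(3)[OF R] by blast
      qed
    next
      fix R assume "R \<notin> S"
      then show "M' R = undefined" using M'X unfolding X_eq by (auto simp: PiE_def extensional_def)
    qed
    then show "M' \<in> U" using V(4) by blast
  qed
  ultimately show ?thesis by blast
qed

end

context LE begin

definition CC :: "(nat \<Rightarrow> nat list \<Rightarrow> bool) \<Rightarrow> (nat \<Rightarrow> nat list \<Rightarrow> bool) set \<Rightarrow> (nat \<Rightarrow> nat) set" where
  "CC M B = {h \<in> G. act h M \<in> B}"
definition star :: "(nat \<Rightarrow> nat) set \<Rightarrow> nat list \<Rightarrow> bool" where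
  "star C q \<longleftrightarrow> meager (N q - C)"
definition BPp :: "(nat \<Rightarrow> nat) set \<Rightarrow> bool" where
  "BPp C \<longleftrightarrow> (\<forall>q. valid q \<longrightarrow> (\<exists>r. pfx q r \<and> valid r \<and> (star C r \<or> star (G - C) r)))"
definition Def :: "(nat \<Rightarrow> nat list \<Rightarrow> bool) set \<Rightarrow> bool" where
  "Def B \<longleftrightarrow> (\<forall>n. \<exists>\<phi>. defs n \<phi> (\<lambda>M q. star (CC M B) q))"
definition Pinv :: "(nat \<Rightarrow> nat list \<Rightarrow> bool) set \<Rightarrow> bool" where
  "Pinv B \<longleftrightarrow> B \<subseteq> X \<and> (\<forall>M\<in>X. BPp (CC M B)) \<and> Def B \<and> Def (X - B)"

lemma CC_sub: "CC M B \<subseteq> G" unfolding CC_def by blast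
lemma CC_compl: "CC M (X - B) = G - CC M B" unfolding CC_def using act_X by blast
lemma CC_UN: "CC M (\<Union>k. B k) = (\<Union>k. CC M (B k))" for B :: "nat \<Rightarrow> _" unfolding CC_def by blast

lemma ext_all: "(\<forall>r. pfx q r \<longrightarrow> P r) \<longleftrightarrow> (\<forall>j w. length w = j \<longrightarrow> P (q @ w))"
  unfolding pfx_def by auto
lemma ext_ex: "(\<exists>r. pfx q r \<and> P r) \<longleftrightarrow> (\<exists>j w. length w = j \<and> P (q @ w))"
  unfolding pfx_def by auto

lemma defs_BigOr_pair:
  assumes "\<And>a b. defs n (f a b) (P a b)"
  shows "defs n (BigOr (\<lambda>i. case prod_decode i of (a, b) \<Rightarrow> f a b)) (\<lambda>M q. \<exists>a b. P a b M q)"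
proof -
  have "defs n ((\<lambda>i. case prod_decode i of (a, b) \<Rightarrow> f a b) i) ((\<lambda>i. case prod_decode i of (a, b) \<Rightarrow> P a b) i)" for i
    using assms by (cases "prod_decode i") simp
  then have d: "defs n (BigOr (\<lambda>i. case prod_decode i of (a, b) \<Rightarrow> f a b)) (\<lambda>M q. \<exists>i. (case prod_decode i of (a, b) \<Rightarrow> P a b) M q)"
    by (rule defs_BigOr)
  show ?thesis
  proof (rule defs_cong[OF d])
    fix M q
    show "(\<exists>i. (case prod_decode i of (a, b) \<Rightarrow> P a b) M q) = (\<exists>a b. P a b M q)"
    proof
      assume "\<exists>i. (case prod_decode i of (a, b) \<Rightarrow> P a b) M q"
      then obtain i where "(case prod_decode i of (a, b) \<Rightarrow> P a b) M q" by blast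
      then show "\<exists>a b. P a b M q" by (cases "prod_decode i") auto
    next
      assume "\<exists>a b. P a b M q"
      then obtain a b where "P a b M q" by blast
      then have "(case prod_decode (prod_encode (a, b)) of (a, b) \<Rightarrow> P a b) M q" by simp
      then show "\<exists>i. (case prod_decode i of (a, b) \<Rightarrow> P a b) M q" by blast
    qed
  qed
qed

lemma nonmeager_star:
  assumes CG: "C \<subseteq> G" and bp: "BPp C" and q: "valid q" and nm: "\<not> meager (C \<inter> N q)"
  shows "\<exists>r. pfx q r \<and> valid r \<and> star C r"
proof (rule ccontr)
  assume H: "\<not> (\<exists>r. pfx q r \<and> valid r \<and> star C r)"
  have "meager (C \<inter> N q)"
  proof (rule localize)
    fix r assume r: "pfx q r" "valid r"
    then obtain s where s: "pfx r s" "valid s" "star C s \<or> star (G - C) s" using bp unfolding BPp_def by blast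
    have "pfx q s" using r(1) s(1) pfx_trans by blast
    then have "\<not> star C s" using H s(2) by blast
    then have "star (G - C) s" using s(3) by blast
    then have "meager (N s - (G - C))" unfolding star_def .
    moreover have "C \<inter> N s \<subseteq> N s - (G - C)" using CG by blast
    ultimately have "meager (C \<inter> N s)" using meager_mono by blast
    then show "\<exists>s. pfx r s \<and> valid s \<and> meager (C \<inter> N s)" using s by blast
  qed
  then show False using nm by blast
qed

lemma BPp_compl: "C \<subseteq> G \<Longrightarrow> BPp C \<Longrightarrow> BPp (G - C)"
proof -
  assume "C \<subseteq> G" "BPp C"
  moreover have "G - (G - C) = C" using \<open>C \<subseteq> G\<close> by blast
  ultimately show ?thesis unfolding BPp_def by metis
qed

lemma Pinv_compl: assumes "Pinv B" shows "Pinv (X - B)"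
proof -
  have BX: "B \<subseteq> X" using assms unfolding Pinv_def by blast
  then have XX: "X - (X - B) = B" by blast
  have "BPp (CC M (X - B))" if "M \<in> X" for M
    unfolding CC_compl using BPp_compl[OF CC_sub] assms that unfolding Pinv_def by blast
  then show ?thesis using assms unfolding Pinv_def XX by blast
qed

lemma star_mono: "C \<subseteq> D \<Longrightarrow> star C q \<Longrightarrow> star D q"
proof -
  assume "C \<subseteq> D" "star C q"
  then have "N q - D \<subseteq> N q - C" "meager (N q - C)" unfolding star_def by blast+
  then show "star D q" unfolding star_def by (rule meager_mono)
qed

lemma star_UN:
  fixes C :: "nat \<Rightarrow> (nat \<Rightarrow> nat) set"
  assumes CG: "\<And>k. C k \<subseteq> G" and bp: "\<And>k. BPp (C k)"
  shows "star (\<Union>k. C k) q \<longleftrightarrow> (\<forall>r. pfx q r \<longrightarrow> valid r \<longrightarrow> (\<exists>s. pfx r s \<and> valid s \<and> (\<exists>k. star (C k) s)))"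
proof
  assume st: "star (\<Union>k. C k) q"
  show "\<forall>r. pfx q r \<longrightarrow> valid r \<longrightarrow> (\<exists>s. pfx r s \<and> valid s \<and> (\<exists>k. star (C k) s))"
  proof (intro allI impI)
    fix r assume r: "pfx q r" "valid r"
    show "\<exists>s. pfx r s \<and> valid s \<and> (\<exists>k. star (C k) s)"
    proof (cases "\<exists>k. \<not> meager (C k \<inter> N r)")
      case True
      then obtain k where "\<not> meager (C k \<inter> N r)" by blast
      then have "\<exists>s. pfx r s \<and> valid s \<and> star (C k) s" by (rule nonmeager_star[OF CG bp r(2)])
      then show ?thesis by blast
    next
      case False
      have m1: "meager (\<Union>k. C k \<inter> N r)" by (rule meager_UN) (use False in blast)
      have "meager (N q - (\<Union>k. C k))" using st unfolding star_def .
      moreover have "N r - (\<Union>k. C k) \<subseteq> N q - (\<Union>k. C k)" using N_mono[OF r(1)] by blast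
      ultimately have m2: "meager (N r - (\<Union>k. C k))" by (rule meager_mono[rotated])
      have "N r \<subseteq> (\<Union>k. C k \<inter> N r) \<union> (N r - (\<Union>k. C k))" by blast
      then have "meager (N r)" using meager_Un[OF m1 m2] by (rule meager_mono)
      then show ?thesis using baire[OF r(2)] by blast
    qed
  qed
next
  assume H: "\<forall>r. pfx q r \<longrightarrow> valid r \<longrightarrow> (\<exists>s. pfx r s \<and> valid s \<and> (\<exists>k. star (C k) s))"
  have "meager ((N q - (\<Union>k. C k)) \<inter> N q)"
  proof (rule localize)
    fix r assume "pfx q r" "valid r"
    then obtain s k where s: "pfx r s" "valid s" "star (C k) s" using H by blast
    have "(N q - (\<Union>k. C k)) \<inter> N s \<subseteq> N s - C k" by blast
    then have "meager ((N q - (\<Union>k. C k)) \<inter> N s)" using s(3) unfolding star_def by (rule meager_mono)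
    then show "\<exists>s. pfx r s \<and> valid s \<and> meager ((N q - (\<Union>k. C k)) \<inter> N s)" using s by blast
  qed
  moreover have "(N q - (\<Union>k. C k)) \<inter> N q = N q - (\<Union>k. C k)" by blast
  ultimately show "star (\<Union>k. C k) q" unfolding star_def by simp
qed

lemma star_compl_UN:
  fixes C :: "nat \<Rightarrow> (nat \<Rightarrow> nat) set" shows
  "star (G - (\<Union>k. C k)) q \<longleftrightarrow> (\<forall>k. star (G - C k) q)"
proof
  assume "star (G - (\<Union>k. C k)) q"
  show "\<forall>k. star (G - C k) q"
  proof
    fix k
    have "G - (\<Union>k. C k) \<subseteq> G - C k" by blast
    then show "star (G - C k) q" using \<open>star (G - (\<Union>k. C k)) q\<close> by (rule star_mono)
  qed
next
  assume "\<forall>k. star (G - C k) q"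
  then have "\<And>k. meager (N q - (G - C k))" unfolding star_def by blast
  then have "meager (\<Union>k. N q - (G - C k))" by (rule meager_UN)
  moreover have "N q - (G - (\<Union>k. C k)) \<subseteq> (\<Union>k. N q - (G - C k))" using N_sub[of q] by blast
  ultimately show "star (G - (\<Union>k. C k)) q" unfolding star_def by (rule meager_mono[rotated])
qed

lemma BPp_UN:
  fixes C :: "nat \<Rightarrow> (nat \<Rightarrow> nat) set"
  assumes CG: "\<And>k. C k \<subseteq> G" and bp: "\<And>k. BPp (C k)"
  shows "BPp (\<Union>k. C k)"
  unfolding BPp_def
proof (intro allI impI)
  fix q assume q: "valid q"
  show "\<exists>r. pfx q r \<and> valid r \<and> (star (\<Union>k. C k) r \<or> star (G - (\<Union>k. C k)) r)"
  proof (cases "\<exists>k. \<not> meager (C k \<inter> N q)")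
    case True
    then obtain k where "\<not> meager (C k \<inter> N q)" by blast
    then have "\<exists>r. pfx q r \<and> valid r \<and> star (C k) r" by (rule nonmeager_star[OF CG bp q])
    then obtain r where r: "pfx q r" "valid r" "star (C k) r" by blast
    have "C k \<subseteq> (\<Union>k. C k)" by blast
    then have "star (\<Union>k. C k) r" using r(3) by (rule star_mono)
    then show ?thesis using r by blast
  next
    case False
    have "meager (\<Union>k. C k \<inter> N q)" by (rule meager_UN) (use False in blast)
    moreover have "N q - (G - (\<Union>k. C k)) \<subseteq> (\<Union>k. C k \<inter> N q)" using N_sub[of q] by blast
    ultimately have "star (G - (\<Union>k. C k)) q" unfolding star_def by (rule meager_mono[rotated])
    then show ?thesis using q pfx_refl by blast
  qed
qed

lemma Pinv_UN:
  fixes B :: "nat \<Rightarrow> (nat \<Rightarrow> nat list \<Rightarrow> bool) set"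
  assumes P: "\<And>k. Pinv (B k)"
  shows "Pinv (\<Union>k. B k)"
proof -
  have BX: "(\<Union>k. B k) \<subseteq> X" using P unfolding Pinv_def by blast
  have bp: "\<And>M k. M \<in> X \<Longrightarrow> BPp (CC M (B k))" using P unfolding Pinv_def by blast
  have BP: "BPp (CC M (\<Union>k. B k))" if "M \<in> X" for M
    unfolding CC_UN by (rule BPp_UN[OF CC_sub bp[OF that]])
  have DefC: "Def (X - (\<Union>k. B k))" unfolding Def_def
  proof
    fix n
    have "\<forall>k. \<exists>\<phi>. defs n \<phi> (\<lambda>M q. star (CC M (X - B k)) q)" using P unfolding Pinv_def Def_def by blast
    then obtain \<phi> where \<phi>0: "\<forall>k. defs n (\<phi> k) (\<lambda>M q. star (CC M (X - B k)) q)"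
      by (rule choice_iff[THEN iffD1, elim_format]) blast
    have \<phi>: "\<And>k. defs n (\<phi> k) (\<lambda>M q. star (CC M (X - B k)) q)" using \<phi>0 by blast
    have "defs n (BigAnd \<phi>) (\<lambda>M q. \<forall>k. star (CC M (X - B k)) q)" by (rule defs_BigAnd) (rule \<phi>)
    then have "defs n (BigAnd \<phi>) (\<lambda>M q. star (CC M (X - (\<Union>k. B k))) q)"
      by (rule defs_cong) (simp add: CC_compl CC_UN star_compl_UN)
    then show "\<exists>\<phi>. defs n \<phi> (\<lambda>M q. star (CC M (X - (\<Union>k. B k))) q)" by blast
  qed
  have DefB: "Def (\<Union>k. B k)" unfolding Def_def
  proof
    fix n
    have "\<forall>k. \<exists>f. \<forall>m. defs m (f m) (\<lambda>M q. star (CC M (B k)) q)"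
    proof
      fix k
      have "\<forall>m. \<exists>\<phi>. defs m \<phi> (\<lambda>M q. star (CC M (B k)) q)" using P[of k] unfolding Pinv_def Def_def by blast
      then show "\<exists>f. \<forall>m. defs m (f m) (\<lambda>M q. star (CC M (B k)) q)" by (rule choice)
    qed
    then obtain \<phi> where \<phi>0: "\<forall>k. \<forall>m. defs m (\<phi> k m) (\<lambda>M q. star (CC M (B k)) q)"
      by (rule choice_iff[THEN iffD1, elim_format]) blast
    have \<phi>: "\<And>k m. defs m (\<phi> k m) (\<lambda>M q. star (CC M (B k)) q)" using \<phi>0 by blast
    have ps: "\<And>m. defs m (psi m) (\<lambda>M q. valid q)" by (rule defs_psi)
    define F1 where "F1 j j' k = Conj (psi (n + j + j')) (\<phi> k (n + j + j'))" for j j' k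
    define F2 where "F2 j = BigOr (\<lambda>i. case prod_decode i of (j', k) \<Rightarrow> exs (n + j) j' (F1 j j' k))" for j
    define \<Phi> where "\<Phi> = BigAnd (\<lambda>j. alls n j (Imp (psi (n + j)) (F2 j)))"
    have d1: "defs (n + j + j') (F1 j j' k) (\<lambda>M q. valid q \<and> star (CC M (B k)) q)" for j j' k
      unfolding F1_def by (rule defs_Conj[OF ps \<phi>])
    have d2: "defs (n + j) (exs (n + j) j' (F1 j j' k)) (\<lambda>M q. \<exists>w. length w = j' \<and> valid (q @ w) \<and> star (CC M (B k)) (q @ w))" for j j' k
      using defs_exs[OF d1[of j j' k]] by simp
    have d3: "defs (n + j) (F2 j) (\<lambda>M q. \<exists>j' k. \<exists>w. length w = j' \<and> valid (q @ w) \<and> star (CC M (B k)) (q @ w))" for j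
      unfolding F2_def by (rule defs_BigOr_pair[OF d2])
    have d4: "defs (n + j) (Imp (psi (n + j)) (F2 j)) (\<lambda>M q. valid q \<longrightarrow> (\<exists>j' k. \<exists>w. length w = j' \<and> valid (q @ w) \<and> star (CC M (B k)) (q @ w)))" for j
      by (rule defs_Imp[OF ps d3])
    have d5: "defs n (alls n j (Imp (psi (n + j)) (F2 j))) (\<lambda>M q. \<forall>w. length w = j \<longrightarrow> (valid (q @ w) \<longrightarrow> (\<exists>j' k. \<exists>w'. length w' = j' \<and> valid ((q @ w) @ w') \<and> star (CC M (B k)) ((q @ w) @ w'))))" for j
      using defs_alls[OF d4[of j]] by simp
    have "defs n \<Phi> (\<lambda>M q. \<forall>j. \<forall>w. length w = j \<longrightarrow> (valid (q @ w) \<longrightarrow>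
        (\<exists>j' k. \<exists>w'. length w' = j' \<and> (valid ((q @ w) @ w') \<and> star (CC M (B k)) ((q @ w) @ w')))))"
      unfolding \<Phi>_def by (rule defs_BigAnd[OF d5])
    then have "defs n \<Phi> (\<lambda>M q. star (CC M (\<Union>k. B k)) q)"
    proof (rule defs_cong)
      fix M q assume M: "M \<in> X"
      have "star (CC M (\<Union>k. B k)) q \<longleftrightarrow> (\<forall>r. pfx q r \<longrightarrow> valid r \<longrightarrow> (\<exists>s. pfx r s \<and> valid s \<and> (\<exists>k. star (CC M (B k)) s)))"
        unfolding CC_UN by (rule star_UN[OF CC_sub bp[OF M]])
      also have "\<dots> \<longleftrightarrow> (\<forall>j w. length w = j \<longrightarrow> valid (q @ w) \<longrightarrow> (\<exists>j' w'. length w' = j' \<and> valid ((q @ w) @ w') \<and> (\<exists>k. star (CC M (B k)) ((q @ w) @ w'))))"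
        unfolding ext_all ext_ex ..
      also have "\<dots> \<longleftrightarrow> (\<forall>j w. length w = j \<longrightarrow> (valid (q @ w) \<longrightarrow>
        (\<exists>j' k. \<exists>w'. length w' = j' \<and> (valid ((q @ w) @ w') \<and> star (CC M (B k)) ((q @ w) @ w')))))"
        by (intro all_cong1 imp_cong refl) blast
      finally show "(\<forall>j w. length w = j \<longrightarrow> (valid (q @ w) \<longrightarrow>
        (\<exists>j' k. \<exists>w'. length w' = j' \<and> (valid ((q @ w) @ w') \<and> star (CC M (B k)) ((q @ w) @ w'))))) = star (CC M (\<Union>k. B k)) q"
        by (rule sym)
    qed
    then show "\<exists>\<phi>. defs n \<phi> (\<lambda>M q. star (CC M (\<Union>k. B k)) q)" by blast
  qed
  show ?thesis unfolding Pinv_def using BX BP DefB DefC by blast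
qed

end

definition lit :: "nat \<times> nat list \<times> bool \<Rightarrow> form" where
  "lit x = (case x of (R, xs, b) \<Rightarrow> if b then Rel R xs else Neg (Rel R xs))"
definition theta :: "(nat \<times> nat list \<times> bool) list \<Rightarrow> form" where
  "theta c = BigAnd (\<lambda>i. if i < length c then lit (c ! i) else FTrue)"
definition holds :: "(nat \<Rightarrow> nat list \<Rightarrow> bool) \<Rightarrow> nat list \<Rightarrow> (nat \<times> nat list \<times> bool) list \<Rightarrow> bool" where
  "holds M r c \<longleftrightarrow> (\<forall>R xs b. (R, xs, b) \<in> set c \<longrightarrow> M R (map (\<lambda>i. r ! i) xs) = b)"
definition covers :: "(nat \<times> nat list \<times> bool) list \<Rightarrow> nat \<Rightarrow> bool" where
  "covers c m \<longleftrightarrow> (\<forall>R xs b. (R, xs, b) \<in> set c \<longrightarrow> set xs \<subseteq> {..<m})"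

context LE begin

lemma defs_lit:
  assumes "R \<in> S" "length xs = ar R" "set xs \<subseteq> {..<m}"
  shows "defs m (lit (R, xs, b)) (\<lambda>M r. M R (map (\<lambda>i. r ! i) xs) = b)"
  unfolding defs_def
proof (intro conjI ballI allI)
  show "wf_form S ar FA (lit (R, xs, b))" using assms by (simp add: lit_def)
  show "fv (lit (R, xs, b)) \<subseteq> {..<m}" using assms by (simp add: lit_def)
  fix M :: "nat \<Rightarrow> nat list \<Rightarrow> bool" and e :: "nat \<Rightarrow> nat"
  have "map e xs = map (\<lambda>i. map e [0..<m] ! i) xs" using assms(3) by auto
  then have eq: "M R (map e xs) = M R (map (\<lambda>i. map e [0..<m] ! i) xs)" by (rule arg_cong)
  show "sat FR M e (lit (R, xs, b)) = (M R (map (\<lambda>i. map e [0..<m] ! i) xs) = b)"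
    by (cases b) (simp_all add: lit_def eq[symmetric])
qed

lemma defs_theta:
  assumes w: "wfc c" and cv: "covers c m"
  shows "defs m (theta c) (\<lambda>M r. holds M r c)"
proof -
  have d: "defs m (if i < length c then lit (c ! i) else FTrue)
     (\<lambda>M r. i < length c \<longrightarrow> (case c ! i of (R, xs, b) \<Rightarrow> M R (map (\<lambda>i. r ! i) xs) = b))" for i
  proof (cases "i < length c")
    case True
    obtain R xs b where e: "c ! i = (R, xs, b)" by (cases "c ! i") auto
    have "(R, xs, b) \<in> set c" using True e nth_mem by metis
    then have "R \<in> S" "length xs = ar R" "set xs \<subseteq> {..<m}" using w cv unfolding wfc_def covers_def by blast+
    then have "defs m (lit (R, xs, b)) (\<lambda>M r. M R (map (\<lambda>i. r ! i) xs) = b)" by (rule defs_lit)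
    then show ?thesis using True e by simp
  next
    case False
    show ?thesis using False defs_FTrue by simp
  qed
  have "defs m (theta c) (\<lambda>M r. \<forall>i. i < length c \<longrightarrow> (case c ! i of (R, xs, b) \<Rightarrow> M R (map (\<lambda>i. r ! i) xs) = b))"
    unfolding theta_def by (rule defs_BigAnd[OF d])
  then show ?thesis
  proof (rule defs_cong)
    fix M and r :: "nat list"
    show "(\<forall>i. i < length c \<longrightarrow> (case c ! i of (R, xs, b) \<Rightarrow> M R (map (\<lambda>i. r ! i) xs) = b)) = holds M r c"
      unfolding holds_def
    proof
      assume H: "\<forall>i. i < length c \<longrightarrow> (case c ! i of (R, xs, b) \<Rightarrow> M R (map (\<lambda>i. r ! i) xs) = b)"
      show "\<forall>R xs b. (R, xs, b) \<in> set c \<longrightarrow> M R (map (\<lambda>i. r ! i) xs) = b"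
      proof (intro allI impI)
        fix R xs b assume "(R, xs, b) \<in> set c"
        then obtain i where "i < length c" "c ! i = (R, xs, b)" by (metis in_set_conv_nth)
        then show "M R (map (\<lambda>i. r ! i) xs) = b" using H by fastforce
      qed
    next
      assume H: "\<forall>R xs b. (R, xs, b) \<in> set c \<longrightarrow> M R (map (\<lambda>i. r ! i) xs) = b"
      show "\<forall>i. i < length c \<longrightarrow> (case c ! i of (R, xs, b) \<Rightarrow> M R (map (\<lambda>i. r ! i) xs) = b)"
      proof (intro allI impI)
        fix i assume i: "i < length c"
        obtain R xs b where e: "c ! i = (R, xs, b)" by (cases "c ! i") auto
        then have "(R, xs, b) \<in> set c" using i nth_mem by metis
        then show "case c ! i of (R, xs, b) \<Rightarrow> M R (map (\<lambda>i. r ! i) xs) = b" using H e by simp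
      qed
    qed
  qed
qed

definition NE :: "(nat \<Rightarrow> nat list \<Rightarrow> bool) set \<Rightarrow> (nat \<Rightarrow> nat list \<Rightarrow> bool) \<Rightarrow> nat list \<Rightarrow> bool" where
  "NE U M q \<longleftrightarrow> (\<exists>j c w. wfc c \<and> basic c \<subseteq> U \<and> covers c (length q + j) \<and> length w = j \<and> valid (q @ w) \<and> holds M (q @ w) c)"

definition ND :: "(nat \<Rightarrow> nat list \<Rightarrow> bool) set \<Rightarrow> nat \<Rightarrow> form" where
  "ND U n = BigOr (\<lambda>i. case prod_decode i of (j, k) \<Rightarrow>
     (if wfc (from_nat k) \<and> basic (from_nat k) \<subseteq> U \<and> covers (from_nat k) (n + j)
      then exs n j (Conj (psi (n + j)) (theta (from_nat k))) else FFalse))"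

lemma defs_ND: "defs n (ND U n) (\<lambda>M q. NE U M q)"
proof -
  define cond where "cond j k \<longleftrightarrow> wfc (from_nat k) \<and> basic (from_nat k) \<subseteq> U \<and> covers (from_nat k) (n + j)" for j k
  have d: "defs n (if cond j k then exs n j (Conj (psi (n + j)) (theta (from_nat k))) else FFalse)
     (\<lambda>M q. cond j k \<and> (\<exists>w. length w = j \<and> valid (q @ w) \<and> holds M (q @ w) (from_nat k)))" for j k
  proof (cases "cond j k")
    case True
    then have "defs (n + j) (theta (from_nat k)) (\<lambda>M r. holds M r (from_nat k))"
      unfolding cond_def by (intro defs_theta) auto
    then have "defs (n + j) (Conj (psi (n + j)) (theta (from_nat k))) (\<lambda>M r. valid r \<and> holds M r (from_nat k))"
      by (rule defs_Conj[OF defs_psi])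
    then have "defs n (exs n j (Conj (psi (n + j)) (theta (from_nat k)))) (\<lambda>M q. \<exists>w. length w = j \<and> valid (q @ w) \<and> holds M (q @ w) (from_nat k))"
      by (rule defs_exs[where P="\<lambda>M r. valid r \<and> holds M r (from_nat k)"])
    then show ?thesis using True by simp
  next
    case False then show ?thesis using defs_FFalse by simp
  qed
  have "defs n (ND U n) (\<lambda>M q. \<exists>j k. cond j k \<and> (\<exists>w. length w = j \<and> valid (q @ w) \<and> holds M (q @ w) (from_nat k)))"
    unfolding ND_def cond_def[symmetric] by (rule defs_BigOr_pair[OF d])
  then show ?thesis
  proof (rule defs_cong)
    fix M and q :: "nat list" assume "length q = n"
    show "(\<exists>j k. cond j k \<and> (\<exists>w. length w = j \<and> valid (q @ w) \<and> holds M (q @ w) (from_nat k))) = NE U M q"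
      unfolding NE_def cond_def \<open>length q = n\<close>[symmetric]
    proof
      assume "\<exists>j k. (wfc (from_nat k) \<and> basic (from_nat k) \<subseteq> U \<and> covers (from_nat k) (length q + j)) \<and>
          (\<exists>w. length w = j \<and> valid (q @ w) \<and> holds M (q @ w) (from_nat k))"
      then show "\<exists>j c w. wfc c \<and> basic c \<subseteq> U \<and> covers c (length q + j) \<and> length w = j \<and> valid (q @ w) \<and> holds M (q @ w) c"
        by blast
    next
      assume "\<exists>j c w. wfc c \<and> basic c \<subseteq> U \<and> covers c (length q + j) \<and> length w = j \<and> valid (q @ w) \<and> holds M (q @ w) c"
      then obtain j c w where "wfc c \<and> basic c \<subseteq> U \<and> covers c (length q + j) \<and> length w = j \<and> valid (q @ w) \<and> holds M (q @ w) c"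
        by blast
      then have "(wfc (from_nat (to_nat c)) \<and> basic (from_nat (to_nat c)) \<subseteq> U \<and> covers (from_nat (to_nat c)) (length q + j)) \<and>
          (\<exists>w. length w = j \<and> valid (q @ w) \<and> holds M (q @ w) (from_nat (to_nat c)))" by auto
      then show "\<exists>j k. (wfc (from_nat k) \<and> basic (from_nat k) \<subseteq> U \<and> covers (from_nat k) (length q + j)) \<and>
          (\<exists>w. length w = j \<and> valid (q @ w) \<and> holds M (q @ w) (from_nat k))" by blast
    qed
  qed
qed

end

context LE begin

lemma N_take: "h \<in> N q \<Longrightarrow> q = map h [0..<length q]" unfolding N_def by blast

lemma refine: "h \<in> N q \<Longrightarrow> h \<in> N s \<Longrightarrow> \<exists>t. pfx q t \<and> pfx s t \<and> h \<in> N t"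
proof -
  assume hq: "h \<in> N q" and hs: "h \<in> N s"
  define t where "t = map h [0..<max (length q) (length s)]"
  have "pfx q t" using pfx_map_upt[of "length q" "max (length q) (length s)" h] N_take[OF hq] unfolding t_def by simp
  moreover have "pfx s t" using pfx_map_upt[of "length s" "max (length q) (length s)" h] N_take[OF hs] unfolding t_def by simp
  moreover have "h \<in> N t" unfolding t_def by (rule in_N) (use hq N_sub in blast)
  ultimately show ?thesis by blast
qed

lemma C_open:
  assumes M: "M \<in> X" and U: "openin (logic_space S ar) U" and h: "h \<in> CC M U"
  shows "\<exists>s. h \<in> N s \<and> N s \<subseteq> CC M U"
proof -
  have hG: "h \<in> G" and hU: "act h M \<in> U" using h unfolding CC_def by auto
  obtain c where c: "wfc c" "act h M \<in> basic c" "basic c \<subseteq> U" using open_basic[OF U hU] by blast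
  define s where "s = map h [0..<bnd c]"
  have "h \<in> N s" unfolding s_def by (rule in_N[OF hG])
  moreover have "N s \<subseteq> CC M U"
  proof
    fix h' assume h': "h' \<in> N s"
    have "M R (map h' xs) = b" if "(R, xs, b) \<in> set c" for R xs b
    proof -
      have "map h' xs = map h xs"
      proof (rule map_cong[OF refl])
        fix x assume "x \<in> set xs"
        then have x: "x < bnd c" using bnd_less that by blast
        then have "h' x = s ! x" using N_nth[OF h'] unfolding s_def by simp
        also have "\<dots> = h x" unfolding s_def using x by simp
        finally show "h' x = h x" .
      qed
      moreover have "M R (map h xs) = b" using c(1,2) act_basic that by blast
      ultimately show ?thesis by metis
    qed
    then have "act h' M \<in> basic c" using act_basic[OF c(1)] by blast
    then show "h' \<in> CC M U" using c(3) h' N_sub unfolding CC_def by blast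
  qed
  ultimately show ?thesis by blast
qed

lemma NE_iff:
  assumes M: "M \<in> X" and U: "openin (logic_space S ar) U"
  shows "N q \<inter> CC M U \<noteq> {} \<longleftrightarrow> NE U M q"
proof
  assume "N q \<inter> CC M U \<noteq> {}"
  then obtain h where hq: "h \<in> N q" and h: "h \<in> CC M U" by blast
  have hG: "h \<in> G" and hU: "act h M \<in> U" using h unfolding CC_def by auto
  obtain c where c: "wfc c" "act h M \<in> basic c" "basic c \<subseteq> U" using open_basic[OF U hU] by blast
  define L where "L = max (length q) (bnd c)"
  define r where "r = map h [0..<L]"
  have "pfx q r" using pfx_map_upt[of "length q" L h] N_take[OF hq] unfolding r_def L_def by simp
  then obtain w where w: "r = q @ w" unfolding pfx_def by blast
  have lr: "length r = L" unfolding r_def by simp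
  have "covers c (length q + length w)" unfolding covers_def
  proof (intro allI impI subsetI)
    fix R xs b x assume "(R, xs, b) \<in> set c" "x \<in> set xs"
    then have "x < bnd c" by (rule bnd_less)
    then show "x \<in> {..<length q + length w}" using lr w unfolding L_def by simp
  qed
  moreover have "valid (q @ w)" using valid_map[OF hG] w unfolding r_def by metis
  moreover have "holds M (q @ w) c" unfolding holds_def
  proof (intro allI impI)
    fix R xs b assume Rc: "(R, xs, b) \<in> set c"
    have "map (\<lambda>i. r ! i) xs = map h xs"
    proof (rule map_cong[OF refl])
      fix x assume "x \<in> set xs"
      then have "x < L" using bnd_less[OF Rc] unfolding L_def by fastforce
      then show "r ! x = h x" unfolding r_def by simp
    qed
    moreover have "M R (map h xs) = b" using c(1,2) act_basic Rc by blast
    ultimately show "M R (map (\<lambda>i. (q @ w) ! i) xs) = b" using w by metis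
  qed
  ultimately show "NE U M q" unfolding NE_def using c(1,3) by blast
next
  assume "NE U M q"
  then obtain j c w where c: "wfc c" "basic c \<subseteq> U" "covers c (length q + j)" "length w = j" "valid (q @ w)"
    "holds M (q @ w) c" unfolding NE_def by blast
  obtain h where h: "h \<in> N (q @ w)" using c(5) unfolding valid_def by blast
  have hq: "h \<in> N q" using N_mono[OF pfx_append] h by blast
  have hG: "h \<in> G" using h N_sub by blast
  have "M R (map h xs) = b" if Rc: "(R, xs, b) \<in> set c" for R xs b
  proof -
    have "map h xs = map (\<lambda>i. (q @ w) ! i) xs"
    proof (rule map_cong[OF refl])
      fix x assume "x \<in> set xs"
      then have "x < length (q @ w)" using c(3,4) Rc unfolding covers_def by fastforce
      then show "h x = (q @ w) ! x" by (rule N_nth[OF h])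
    qed
    then show ?thesis using c(6) Rc unfolding holds_def by metis
  qed
  then have "act h M \<in> basic c" using act_basic[OF c(1)] by blast
  then have "h \<in> CC M U" using c(2) hG unfolding CC_def by blast
  then show "N q \<inter> CC M U \<noteq> {}" using hq by blast
qed

lemma Pinv_open:
  assumes U: "openin (logic_space S ar) U"
  shows "Pinv U"
proof -
  have UX: "U \<subseteq> X" using U by (rule openin_subset)
  have opn: "\<exists>t. pfx q t \<and> valid t \<and> N t \<subseteq> CC M U \<inter> N q" if M: "M \<in> X" and h: "h \<in> N q \<inter> CC M U" for M q h
  proof -
    obtain s where s: "h \<in> N s" "N s \<subseteq> CC M U" using C_open[OF M U] h by blast
    obtain t where t: "pfx q t" "pfx s t" "h \<in> N t" using refine[of h q s] h s(1) by blast
    have "valid t" using t(3) unfolding valid_def by blast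
    moreover have "N t \<subseteq> CC M U \<inter> N q" using N_mono[OF t(1)] N_mono[OF t(2)] s(2) by blast
    ultimately show ?thesis using t(1) by blast
  qed
  have starC: "star (CC M U) q \<longleftrightarrow> (\<forall>r. pfx q r \<longrightarrow> valid r \<longrightarrow> N r \<inter> CC M U \<noteq> {})" if M: "M \<in> X" for M q
  proof
    assume st: "star (CC M U) q"
    show "\<forall>r. pfx q r \<longrightarrow> valid r \<longrightarrow> N r \<inter> CC M U \<noteq> {}"
    proof (intro allI impI notI)
      fix r assume r: "pfx q r" "valid r" and e: "N r \<inter> CC M U = {}"
      have "N r \<subseteq> N q - CC M U" using N_mono[OF r(1)] e by blast
      then have "meager (N r)" using st unfolding star_def by (rule meager_mono)
      then show False using baire[OF r(2)] by blast
    qed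
  next
    assume H: "\<forall>r. pfx q r \<longrightarrow> valid r \<longrightarrow> N r \<inter> CC M U \<noteq> {}"
    have "meager ((N q - CC M U) \<inter> N q)"
    proof (rule localize)
      fix r assume r: "pfx q r" "valid r"
      then obtain h where "h \<in> N r \<inter> CC M U" using H by blast
      then obtain t where t: "pfx r t" "valid t" "N t \<subseteq> CC M U \<inter> N r" using opn[OF M] by blast
      have "(N q - CC M U) \<inter> N t = {}" using t(3) by blast
      then show "\<exists>s. pfx r s \<and> valid s \<and> meager ((N q - CC M U) \<inter> N s)" using t(1,2) meager_empty by metis
    qed
    moreover have "(N q - CC M U) \<inter> N q = N q - CC M U" by blast
    ultimately show "star (CC M U) q" unfolding star_def by simp
  qed
  have starNC: "star (CC M (X - U)) q \<longleftrightarrow> N q \<inter> CC M U = {}" if M: "M \<in> X" for M q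
  proof
    assume st: "star (CC M (X - U)) q"
    show "N q \<inter> CC M U = {}"
    proof (rule ccontr)
      assume "N q \<inter> CC M U \<noteq> {}"
      then obtain h where "h \<in> N q \<inter> CC M U" by blast
      then obtain t where t: "pfx q t" "valid t" "N t \<subseteq> CC M U \<inter> N q" using opn[OF M] by blast
      have "N t \<subseteq> N q - CC M (X - U)" using t(3) unfolding CC_compl by blast
      then have "meager (N t)" using st unfolding star_def by (rule meager_mono)
      then show False using baire[OF t(2)] by blast
    qed
  next
    assume "N q \<inter> CC M U = {}"
    then have e: "N q - CC M (X - U) = {}" unfolding CC_compl using N_sub[of q] by blast
    show "star (CC M (X - U)) q" unfolding star_def e by (rule meager_empty)
  qed
  have BP: "BPp (CC M U)" if M: "M \<in> X" for M
    unfolding BPp_def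
  proof (intro allI impI)
    fix q assume q: "valid q"
    show "\<exists>r. pfx q r \<and> valid r \<and> (star (CC M U) r \<or> star (G - CC M U) r)"
    proof (cases "N q \<inter> CC M U = {}")
      case True
      then have "star (G - CC M U) q" using starNC[OF M, of q] unfolding CC_compl by simp
      then show ?thesis using q pfx_refl by blast
    next
      case False
      then obtain h where "h \<in> N q \<inter> CC M U" by blast
      then obtain t where t: "pfx q t" "valid t" "N t \<subseteq> CC M U \<inter> N q" using opn[OF M] by blast
      have e: "N t - CC M U = {}" using t(3) by blast
      have "star (CC M U) t" unfolding star_def e by (rule meager_empty)
      then show ?thesis using t(1,2) by blast
    qed
  qed
  have DefU: "Def U" unfolding Def_def
  proof
    fix n
    define \<Phi> where "\<Phi> = BigAnd (\<lambda>j. alls n j (Imp (psi (n + j)) (ND U (n + j))))"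
    have d4: "defs (n + j) (Imp (psi (n + j)) (ND U (n + j))) (\<lambda>M q. valid q \<longrightarrow> NE U M q)" for j
      by (rule defs_Imp[OF defs_psi defs_ND])
    have d5: "defs n (alls n j (Imp (psi (n + j)) (ND U (n + j)))) (\<lambda>M q. \<forall>w. length w = j \<longrightarrow> (valid (q @ w) \<longrightarrow> NE U M (q @ w)))" for j
      by (rule defs_alls[where P="\<lambda>M q. valid q \<longrightarrow> NE U M q", OF d4])
    have "defs n \<Phi> (\<lambda>M q. \<forall>j. \<forall>w. length w = j \<longrightarrow> (valid (q @ w) \<longrightarrow> NE U M (q @ w)))"
      unfolding \<Phi>_def by (rule defs_BigAnd[OF d5])
    then have "defs n \<Phi> (\<lambda>M q. star (CC M U) q)"
    proof (rule defs_cong)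
      fix M q assume M: "M \<in> X"
      have "star (CC M U) q \<longleftrightarrow> (\<forall>r. pfx q r \<longrightarrow> valid r \<longrightarrow> N r \<inter> CC M U \<noteq> {})"
        by (rule starC[OF M])
      also have "\<dots> \<longleftrightarrow> (\<forall>r. pfx q r \<longrightarrow> valid r \<longrightarrow> NE U M r)"
        using NE_iff[OF M U] by presburger
      also have "\<dots> \<longleftrightarrow> (\<forall>j w. length w = j \<longrightarrow> (valid (q @ w) \<longrightarrow> NE U M (q @ w)))"
        by (rule ext_all)
      finally show "(\<forall>j w. length w = j \<longrightarrow> (valid (q @ w) \<longrightarrow> NE U M (q @ w))) = star (CC M U) q" by (rule sym)
    qed
    then show "\<exists>\<phi>. defs n \<phi> (\<lambda>M q. star (CC M U) q)" by blast
  qed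
  have DefXU: "Def (X - U)" unfolding Def_def
  proof
    fix n
    have "defs n (Neg (ND U n)) (\<lambda>M q. \<not> NE U M q)" by (rule defs_Neg[OF defs_ND])
    then have "defs n (Neg (ND U n)) (\<lambda>M q. star (CC M (X - U)) q)"
    proof (rule defs_cong)
      fix M q assume M: "M \<in> X"
      show "(\<not> NE U M q) = star (CC M (X - U)) q" using starNC[OF M, of q] NE_iff[OF M U, of q] by blast
    qed
    then show "\<exists>\<phi>. defs n \<phi> (\<lambda>M q. star (CC M (X - U)) q)" by blast
  qed
  show ?thesis unfolding Pinv_def using UX BP DefU DefXU by blast
qed

lemma borel_Pinv:
  assumes "A \<in> borel_sets_of (logic_space S ar)"
  shows "Pinv A"
  using assms unfolding borel_sets_of_def
proof (induction rule: sigma_sets.induct)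
  case (Basic a) then show ?case using Pinv_open by blast
next
  case Empty then show ?case using Pinv_open[OF openin_empty] by simp
next
  case (Compl a) show ?case using Compl.IH by (rule Pinv_compl)
next
  case (Union a) show ?case by (rule Pinv_UN) (rule Union.IH)
qed

lemma inv_G: "h \<in> G \<Longrightarrow> inv h \<in> G"
proof -
  assume h: "h \<in> G"
  then have b: "bij h" by (simp add: Aut_def)
  have "map (inv h) ` FR i = FR i" for i
  proof -
    have "map (inv h) ` FR i = map (inv h) ` map h ` FR i" using G_FR[OF h] by simp
    also have "\<dots> = (map (inv h) \<circ> map h) ` FR i" by (simp add: image_comp)
    also have "map (inv h) \<circ> map h = id" using bij_is_inj[OF b] by (auto simp: fun_eq_iff map_idI)
    finally show ?thesis by simp
  qed
  then show ?thesis using bij_imp_bij_inv[OF b] by (simp add: Aut_def)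
qed

lemma perm_act_inv: assumes h: "h \<in> G" and M: "M \<in> X" shows "perm_act S ar (inv h) M = act h M"
proof -
  have b: "bij h" using h by (simp add: Aut_def)
  have "(xs \<in> map (inv h) ` {ys. M R ys}) \<longleftrightarrow> M R (map h xs)" for R xs
  proof
    assume "xs \<in> map (inv h) ` {ys. M R ys}"
    then obtain ys where "M R ys" "xs = map (inv h) ys" by blast
    moreover have "map h (map (inv h) ys) = ys" using bij_is_surj[OF b] by (simp add: map_idI surj_f_inv_f)
    ultimately show "M R (map h xs)" by simp
  next
    assume "M R (map h xs)"
    moreover have "map (inv h) (map h xs) = xs" using bij_is_inj[OF b] by (simp add: map_idI)
    ultimately show "xs \<in> map (inv h) ` {ys. M R ys}" by (metis (mono_tags) imageI mem_Collect_eq)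
  qed
  then show ?thesis unfolding perm_act_def act_def by simp
qed

lemma act_inj: assumes h: "h \<in> G" and M: "M \<in> X" and M': "M' \<in> X" and e: "act h M = act h M'" shows "M = M'"
proof -
  have b: "bij h" using h by (simp add: Aut_def)
  have "M R xs = M' R xs" if R: "R \<in> S" and xs: "xs \<in> tuples (ar R)" for R xs
  proof -
    have xs': "map (inv h) xs \<in> tuples (ar R)" using xs by (simp add: tuples_def)
    have hh: "map h (map (inv h) xs) = xs" using bij_is_surj[OF b] by (simp add: map_idI surj_f_inv_f)
    have "act h M R (map (inv h) xs) = act h M' R (map (inv h) xs)" using e by simp
    then show ?thesis using R xs' hh unfolding act_def by simp
  qed
  note e1 = this
  have MX: "M \<in> (\<Pi>\<^sub>E R\<in>S. \<Pi>\<^sub>E xs\<in>tuples (ar R). (UNIV :: bool set))" and M'X: "M' \<in> (\<Pi>\<^sub>E R\<in>S. \<Pi>\<^sub>E xs\<in>tuples (ar R). (UNIV :: bool set))"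
    using M M' unfolding X_eq by auto
  show ?thesis
  proof (rule ext, rule ext)
    fix R xs
    show "M R xs = M' R xs"
    proof (cases "R \<in> S")
      case False
      then have "M R = undefined" "M' R = undefined" using MX M'X by (auto intro: PiE_arb)
      then show ?thesis by simp
    next
      case R: True
      show ?thesis
      proof (cases "xs \<in> tuples (ar R)")
        case True then show ?thesis using e1 R by blast
      next
        case False
        have "M R \<in> (\<Pi>\<^sub>E xs\<in>tuples (ar R). (UNIV :: bool set))" "M' R \<in> (\<Pi>\<^sub>E xs\<in>tuples (ar R). (UNIV :: bool set))"
          using MX M'X R by (auto intro: PiE_mem)
        then have "M R xs = undefined" "M' R xs = undefined" using False by (auto intro: PiE_arb)
        then show ?thesis by simp
      qed
    qed
  qed
qed

theorem main:
  assumes A: "A \<in> borel_sets_of (logic_space S ar)"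
    and inv: "\<And>g. g \<in> Aut FR \<Longrightarrow> perm_act S ar g ` A = A"
  shows "definable S ar FA FR A"
proof -
  have P: "Pinv A" using A by (rule borel_Pinv)
  then have AX: "A \<subseteq> X" unfolding Pinv_def by blast
  obtain \<phi> where \<phi>: "defs 0 \<phi> (\<lambda>M q. star (CC M A) q)" using P unfolding Pinv_def Def_def by blast
  have "sentence S ar FA \<phi>" using \<phi> unfolding defs_def sentence_def by auto
  moreover have "M \<in> A \<longleftrightarrow> sat FR M (\<lambda>_. 0) \<phi>" if M: "M \<in> X" for M
  proof -
    have s: "sat FR M (\<lambda>_. 0) \<phi> \<longleftrightarrow> star (CC M A) []" using \<phi> M unfolding defs_def by simp
    show ?thesis
    proof (cases "M \<in> A")
      case True
      have "CC M A = G"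
      proof
        show "G \<subseteq> CC M A"
        proof
          fix h assume h: "h \<in> G"
          have "perm_act S ar (inv h) M \<in> perm_act S ar (inv h) ` A" using True by blast
          then have "act h M \<in> A" using inv[OF inv_G[OF h]] perm_act_inv[OF h M] by simp
          then show "h \<in> CC M A" using h unfolding CC_def by blast
        qed
      qed (rule CC_sub)
      then have "star (CC M A) []" unfolding star_def N_Nil by (simp add: meager_empty)
      then show ?thesis using True s by simp
    next
      case False
      have "CC M A = {}"
      proof (rule ccontr)
        assume "CC M A \<noteq> {}"
        then obtain h where h: "h \<in> G" "act h M \<in> A" unfolding CC_def by blast
        then have "act h M \<in> perm_act S ar (inv h) ` A" using inv[OF inv_G[OF h(1)]] by simp
        then obtain M' where M': "M' \<in> A" "act h M = perm_act S ar (inv h) M'" by blast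
        have M'X: "M' \<in> X" using AX M'(1) by blast
        have "perm_act S ar (inv h) M' = act h M'" by (rule perm_act_inv[OF h(1) M'X])
        then have "act h M = act h M'" using M'(2) by simp
        then have "M = M'" by (rule act_inj[OF h(1) M M'X])
        then show False using False M'(1) by simp
      qed
      then have "\<not> star (CC M A) []" unfolding star_def using baire[OF valid_Nil] N_Nil by simp
      then show ?thesis using False s by simp
    qed
  qed
  ultimately show ?thesis unfolding definable_def by blast
qed

end

theorem proposition6:
  fixes S :: "nat set" and ar :: "nat \<Rightarrow> nat"
    and FA :: "nat \<Rightarrow> nat" and FR :: "nat \<Rightarrow> nat list set"
    and A :: "(nat \<Rightarrow> nat list \<Rightarrow> bool) set"
  assumes "\<And>i. FR i \<subseteq> tuples (FA i)"
    and "A \<in> borel_sets_of (logic_space S ar)"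
    and "\<And>g. g \<in> Aut FR \<Longrightarrow> perm_act S ar g ` A = A"
  shows "definable S ar FA FR A"
proof -
  interpret LE S ar FA FR using assms(1) by unfold_locales
  show ?thesis by (rule main[OF assms(2) assms(3)])
qed

end
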